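(* Let $p\ge1$ be an integer and let $\bm U^n,\bm V^n\in\mathbb V_h$, $0\le n\le M$, satisfy for all such $n$ $$\|\bm U^n\|_h,\ \|\nabla_h\bm U^n\|_h,\ \|\Delta_h\bm U^n\|_h,\ \|\bm U^n\|_{h,\infty},\ \|\bm V^n\|_h,\ \|\nabla_h\bm V^n\|_h,\ \|\Delta_h\bm V^n\|_h,\ \|\bm V^n\|_{h,\infty}\le C.$$ Set $\bm\eta^n=\bm U^n-\bm V^n$, $\bm W^{n+\frac12}=\frac{\bm W^{n+1}+\bm W^n}{2}$ and $\hat{\bm W}^{n+\frac12}=\frac{3\bm W^n-\bm W^{n-1}}{2}$ for $\bm W\in\{\bm U,\bm V,\bm\eta\}$. Then $$\big\langle\mathbb D(\bm U^0)\bm U^{\frac12}-\mathbb D(\bm V^0)\bm V^{\frac12},\bm\eta^{\frac12}\big\rangle_h\le C\big(\|\bm\eta^0\|_h^2+\|\Delta_h\bm\eta^0\|_h^2+\|\bm\eta^1\|_h^2+\|\Delta_h\bm\eta^1\|_h^2\big),$$ and for $n=1,\dots,M-1$, $$\big\langle\mathbb D(\hat{\bm U}^{n+\frac12})\bm U^{n+\frac12}-\mathbb D(\hat{\bm V}^{n+\frac12})\bm V^{n+\frac12},\bm\eta^{n+\frac12}\big\rangle_h\le C\big(\|\bm\eta^{n-1}\|_h^2+\|\bm\eta^n\|_h^2+\|\bm\eta^{n+1}\|_h^2+\|\Delta_h\bm\eta^n\|_h^2+\|\Delta_h\bm\eta^{n+1}\|_h^2\big),$$ where $C$ denotes positive constants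 independent of $h_1,h_2$ and $\tau$.
   Context: $\Omega=[x_L,x_R]\times[y_L,y_R]$, $l_1=x_R-x_L$, $l_2=y_R-y_L$, $N_1,N_2$ even, $h_r=l_r/N_r$, grid points $x_{j_1}=x_L+j_1h_1$, $y_{j_2}=y_L+j_2h_2$, $0\le j_r\le N_r-1$. $\mathbb V_h$: doubly periodic grid functions identified with vectors $\bm U=(U_{0,0},U_{1,0},\dots,U_{N_1-1,0},U_{0,1},\dots,U_{N_1-1,N_2-1})^T$. $\langle\bm U,\bm V\rangle_h=h_1h_2\sum U_{j_1,j_2}V_{j_1,j_2}$, $\|\bm U\|_h^2=\langle\bm U,\bm U\rangle_h$, $\|\bm U\|_{h,\infty}=\max|U_{j_1,j_2}|$, $\|\nabla_h\bm U\|_h^2=\|\delta_x^+\bm U\|_h^2+\|\delta_y^+\bm U\|_h^2$ with forward differences $\delta_x^+U_{j_1,j_2}=(U_{j_1+1,j_2}-U_{j_1,j_2})/h_1$, $\delta_y^+U_{j_1,j_2}=(U_{j_1,j_2+1}-U_{j_1,j_2})/h_2$, and $\Delta_hU_{j_1,j_2}=\frac{U_{j_1+1,j_2}-2U_{j_1,j_2}+U_{j_1-1,j_2}}{h_1^2}+\frac{U_{j_1,j_2+1}-2U_{j_1,j_2}+U_{j_1,j_2-1}}{h_2^2}$. With $\mu_r=2\pi/l_r$, $g^{(1)}_k(x)=\frac1{N_1}\sum_{l=-N_1/2}^{N_1/2}\frac1{a_l}e^{\mathrm il\mu_1(x-x_k)}$, $a_l=1$ for $|l|<N_1/2$, $a_{\pm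 N_1/2}=2$ (similarly $g^{(2)}_k(y)$), $\bm D_s^x=(\frac{d^s}{dx^s}g^{(1)}_k(x_j))_{j,k}$, $\bm D_s^y=(\frac{d^s}{dy^s}g^{(2)}_k(y_j))_{j,k}$. $\mathbb B=\bm I_{N_2}\otimes\bm D_3^x+\bm D_2^y\otimes\bm D_1^x$, $\mathbb L_h=\bm I_{N_2}\otimes\bm D_1^x+\bm D_1^y\otimes\bm I_{N_1}$ ($\otimes$ Kronecker product), $\mathbb D(\bm W)=\mathbb B+\mathbb L_h+\frac1{p+2}(\mathrm{diag}(\bm W^p)\mathbb L_h+\mathbb L_h\mathrm{diag}(\bm W^p))$ with $\bm W^p$ the componentwise power. *)

theory Defs
  imports "HOL-Analysis.Analysis"
begin

text \<open>A grid function is stored as a vector U :: nat => real with the ordering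
  U_{j1,j2} = U (j1 + N1 * j2), 0 <= j1 < N1, 0 <= j2 < N2 (x index fastest),
  as in the paper. Entries with index >= N1*N2 are irrelevant.\<close>

definition gval :: "nat \<Rightarrow> nat \<Rightarrow> (nat \<Rightarrow> real) \<Rightarrow> int \<Rightarrow> int \<Rightarrow> real" where
  "gval N1 N2 U j1 j2 = U (nat (j1 mod int N1) + N1 * nat (j2 mod int N2))"

definition inner_h :: "real \<Rightarrow> real \<Rightarrow> nat \<Rightarrow> nat \<Rightarrow> (nat \<Rightarrow> real) \<Rightarrow> (nat \<Rightarrow> real) \<Rightarrow> real" where
  "inner_h h1 h2 N1 N2 U V = h1 * h2 * (\<Sum>m<N1 * N2. U m * V m)"

definition norm_h :: "real \<Rightarrow> real \<Rightarrow> nat \<Rightarrow> nat \<Rightarrow> (nat \<Rightarrow> real) \<Rightarrow> real" where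
  "norm_h h1 h2 N1 N2 U = sqrt (inner_h h1 h2 N1 N2 U U)"

definition norm_inf_h :: "nat \<Rightarrow> nat \<Rightarrow> (nat \<Rightarrow> real) \<Rightarrow> real" where
  "norm_inf_h N1 N2 U = Max ((\<lambda>m. \<bar>U m\<bar>) ` {..<N1 * N2})"

definition of_grid :: "nat \<Rightarrow> (int \<Rightarrow> int \<Rightarrow> real) \<Rightarrow> (nat \<Rightarrow> real)" where
  "of_grid N1 F = (\<lambda>m. F (int (m mod N1)) (int (m div N1)))"

definition dxp :: "real \<Rightarrow> nat \<Rightarrow> nat \<Rightarrow> (nat \<Rightarrow> real) \<Rightarrow> (nat \<Rightarrow> real)" where
  "dxp h1 N1 N2 U = of_grid N1 (\<lambda>j1 j2. (gval N1 N2 U (j1 + 1) j2 - gval N1 N2 U j1 j2) / h1)"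

definition dyp :: "real \<Rightarrow> nat \<Rightarrow> nat \<Rightarrow> (nat \<Rightarrow> real) \<Rightarrow> (nat \<Rightarrow> real)" where
  "dyp h2 N1 N2 U = of_grid N1 (\<lambda>j1 j2. (gval N1 N2 U j1 (j2 + 1) - gval N1 N2 U j1 j2) / h2)"

definition grad_norm_sq :: "real \<Rightarrow> real \<Rightarrow> nat \<Rightarrow> nat \<Rightarrow> (nat \<Rightarrow> real) \<Rightarrow> real" where
  "grad_norm_sq h1 h2 N1 N2 U =
     (norm_h h1 h2 N1 N2 (dxp h1 N1 N2 U))\<^sup>2 + (norm_h h1 h2 N1 N2 (dyp h2 N1 N2 U))\<^sup>2"

definition lap_h :: "real \<Rightarrow> real \<Rightarrow> nat \<Rightarrow> nat \<Rightarrow> (nat \<Rightarrow> real) \<Rightarrow> (nat \<Rightarrow> real)" where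
  "lap_h h1 h2 N1 N2 U = of_grid N1 (\<lambda>j1 j2.
      (gval N1 N2 U (j1 + 1) j2 - 2 * gval N1 N2 U j1 j2 + gval N1 N2 U (j1 - 1) j2) / h1\<^sup>2
    + (gval N1 N2 U j1 (j2 + 1) - 2 * gval N1 N2 U j1 j2 + gval N1 N2 U j1 (j2 - 1)) / h2\<^sup>2)"

definition a_coef :: "nat \<Rightarrow> int \<Rightarrow> real" where
  "a_coef N l = (if \<bar>l\<bar> = int (N div 2) then 2 else 1)"

text \<open>Trigonometric interpolation basis g_k on [x_L, x_L + len] with N points
  (N even); it is real-valued, Re just returns the real value.\<close>
definition gbasis :: "nat \<Rightarrow> real \<Rightarrow> real \<Rightarrow> nat \<Rightarrow> real \<Rightarrow> real" where
  "gbasis N xL len k x = Re ((1 / of_nat N) *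
     (\<Sum>l \<in> {- int (N div 2) .. int (N div 2)}.
        (1 / complex_of_real (a_coef N l)) *
        exp (\<i> * of_int l * complex_of_real (2 * pi / len) *
              complex_of_real (x - (xL + real k * len / real N)))))"

definition Dspec :: "nat \<Rightarrow> nat \<Rightarrow> real \<Rightarrow> real \<Rightarrow> nat \<Rightarrow> nat \<Rightarrow> real" where
  "Dspec s N xL len j k = ((deriv ^^ s) (gbasis N xL len k)) (xL + real j * len / real N)"

definition idm :: "nat \<Rightarrow> nat \<Rightarrow> real" where
  "idm i k = (if i = k then 1 else 0)"

text \<open>Kronecker product A \<otimes> B where B is N1 x N1: rows/cols indexed by i1 + N1 * i2.\<close>
definition kron :: "nat \<Rightarrow> (nat \<Rightarrow> nat \<Rightarrow> real) \<Rightarrow> (nat \<Rightarrow> nat \<Rightarrow> real) \<Rightarrow> nat \<Rightarrow> nat \<Rightarrow> real" where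
  "kron N1 A B i k = A (i div N1) (k div N1) * B (i mod N1) (k mod N1)"

definition mat_vec :: "nat \<Rightarrow> (nat \<Rightarrow> nat \<Rightarrow> real) \<Rightarrow> (nat \<Rightarrow> real) \<Rightarrow> (nat \<Rightarrow> real)" where
  "mat_vec n A v = (\<lambda>i. \<Sum>k<n. A i k * v k)"

definition Bmat :: "real \<Rightarrow> real \<Rightarrow> real \<Rightarrow> real \<Rightarrow> nat \<Rightarrow> nat \<Rightarrow> nat \<Rightarrow> nat \<Rightarrow> real" where
  "Bmat xL xR yL yR N1 N2 =
     (\<lambda>i k. kron N1 idm (Dspec 3 N1 xL (xR - xL)) i k
          + kron N1 (Dspec 2 N2 yL (yR - yL)) (Dspec 1 N1 xL (xR - xL)) i k)"

definition Lmat :: "real \<Rightarrow> real \<Rightarrow> real \<Rightarrow> real \<Rightarrow> nat \<Rightarrow> nat \<Rightarrow> nat \<Rightarrow> nat \<Rightarrow> real" where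
  "Lmat xL xR yL yR N1 N2 =
     (\<lambda>i k. kron N1 idm (Dspec 1 N1 xL (xR - xL)) i k
          + kron N1 (Dspec 1 N2 yL (yR - yL)) idm i k)"

definition Dmat :: "nat \<Rightarrow> real \<Rightarrow> real \<Rightarrow> real \<Rightarrow> real \<Rightarrow> nat \<Rightarrow> nat \<Rightarrow> (nat \<Rightarrow> real) \<Rightarrow> nat \<Rightarrow> nat \<Rightarrow> real" where
  "Dmat p xL xR yL yR N1 N2 W =
     (\<lambda>i k. Bmat xL xR yL yR N1 N2 i k + Lmat xL xR yL yR N1 N2 i k
          + (W i ^ p * Lmat xL xR yL yR N1 N2 i k + Lmat xL xR yL yR N1 N2 i k * W k ^ p)
            / (real p + 2))"

end

theory Submission
  imports Defs
begin

definition ee :: "nat \<Rightarrow> int \<Rightarrow> complex" where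
  "ee N t = cis (2 * pi * real_of_int t / real N)"

lemma ee_add: "ee N (a + b) = ee N a * ee N b"
  unfolding ee_def by (simp add: cis_mult add_divide_distrib distrib_left)

lemma ee_mult_nat: "ee N (t * int i) = ee N t ^ i"
proof -
  have "ee N t ^ i = cis (real i * (2 * pi * real_of_int t / real N))"
    unfolding ee_def by (rule Complex.DeMoivre)
  also have "real i * (2 * pi * real_of_int t / real N) = 2 * pi * real_of_int (t * int i) / real N"
    by simp
  finally show ?thesis unfolding ee_def by simp
qed

lemma ee_cnj: "cnj (ee N t) = ee N (- t)"
  unfolding ee_def by (simp add: cis_cnj)

lemma ee_norm[simp]: "norm (ee N t) = 1"
  unfolding ee_def by simp

lemma ee_multN: "N > 0 \<Longrightarrow> ee N (int N * k) = 1"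
proof -
  assume "N > 0"
  have "2 * pi * real_of_int (int N * k) / real N = 2 * pi * real_of_int k"
    using \<open>N > 0\<close> by (simp add: field_simps)
  then show ?thesis unfolding ee_def by simp
qed

lemma ee_eq_1: assumes "N > 0" "ee N t = 1" shows "int N dvd t"
proof -
  have "cos (2 * pi * real_of_int t / real N) = 1"
    using assms(2) unfolding ee_def by (metis cis.simps(1) one_complex.simps(1))
  then obtain n :: int where n: "2 * pi * real_of_int t / real N = real_of_int n * 2 * pi"
    by (meson cos_one_2pi_int)
  then have "real_of_int t = real_of_int (n * int N)" using assms(1)
    by (simp add: field_simps)
  then have "t = n * int N" by linarith
  then show ?thesis by simp
qed

lemma ee_ortho:
  assumes "N > 0" "\<not> int N dvd t"
  shows "(\<Sum>j\<in>{a..<a + int N}. ee N (t * j)) = 0"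
proof -
  have "(\<Sum>j\<in>{a..<a + int N}. ee N (t * j)) = (\<Sum>i<N. ee N (t * (a + int i)))"
  proof (rule sum.reindex_bij_witness[where i="\<lambda>i. a + int i" and j="\<lambda>j. nat (j - a)"])
  qed auto
  also have "\<dots> = ee N (t * a) * (\<Sum>i<N. ee N t ^ i)"
    by (simp add: distrib_left ee_add ee_mult_nat sum_distrib_left)
  also have "(\<Sum>i<N. ee N t ^ i) = 0"
  proof -
    have ne: "ee N t \<noteq> 1" using ee_eq_1 assms by blast
    have "ee N t ^ N = 1" using ee_mult_nat[of N t N] ee_multN[OF assms(1), of t]
      by (simp add: mult.commute)
    then show ?thesis using ne by (simp add: geometric_sum)
  qed
  finally show ?thesis by simp
qed

lemma parseval_gen:
  fixes c :: "int \<Rightarrow> complex"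
  assumes N: "N > 0" and A: "finite A"
    and dist: "\<And>l l'. l \<in> A \<Longrightarrow> l' \<in> A \<Longrightarrow> int N dvd (l - l') \<Longrightarrow> l = l'"
  shows "(\<Sum>j\<in>{a..<a + int N}. (cmod (\<Sum>l\<in>A. c l * ee N (l * j)))\<^sup>2)
       = real N * (\<Sum>l\<in>A. (cmod (c l))\<^sup>2)"
proof -
  let ?J = "{a..<a + int N}"
  have "complex_of_real (\<Sum>j\<in>?J. (cmod (\<Sum>l\<in>A. c l * ee N (l * j)))\<^sup>2)
      = (\<Sum>j\<in>?J. (\<Sum>l\<in>A. c l * ee N (l * j)) * cnj (\<Sum>l\<in>A. c l * ee N (l * j)))"
    by (simp only: of_real_sum complex_norm_square)
  also have "\<dots> = (\<Sum>j\<in>?J. \<Sum>l\<in>A. \<Sum>l'\<in>A. c l * cnj (c l') * ee N ((l - l') * j))"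
  proof (rule sum.cong[OF refl])
    fix j
    have e: "ee N (l * j) * ee N (- (l' * j)) = ee N ((l - l') * j)" for l l'
      by (simp add: algebra_simps flip: ee_add)
    show "(\<Sum>l\<in>A. c l * ee N (l * j)) * cnj (\<Sum>l\<in>A. c l * ee N (l * j)) =
      (\<Sum>l\<in>A. \<Sum>l'\<in>A. c l * cnj (c l') * ee N ((l - l') * j))"
      by (simp add: sum_product ee_cnj flip: e) (simp add: algebra_simps)
  qed
  also have "\<dots> = (\<Sum>l\<in>A. \<Sum>l'\<in>A. c l * cnj (c l') * (\<Sum>j\<in>?J. ee N ((l - l') * j)))"
    by (simp add: sum_distrib_left sum.swap[of _ ?J])
  also have "\<dots> = (\<Sum>l\<in>A. \<Sum>l'\<in>A. if l' = l then c l * cnj (c l) * of_nat N else 0)"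
  proof (intro sum.cong refl)
    fix l l' assume "l \<in> A" "l' \<in> A"
    show "c l * cnj (c l') * (\<Sum>j\<in>?J. ee N ((l - l') * j)) =
          (if l' = l then c l * cnj (c l) * of_nat N else 0)"
    proof (cases "l' = l")
      case True then show ?thesis by (simp add: ee_def)
    next
      case False
      then have "\<not> int N dvd (l - l')" using dist \<open>l \<in> A\<close> \<open>l' \<in> A\<close> by force
      then show ?thesis using ee_ortho[OF N] False by simp
    qed
  qed
  also have "\<dots> = (\<Sum>l\<in>A. c l * cnj (c l) * of_nat N)"
    using A by (simp add: sum.delta)
  also have "\<dots> = complex_of_real (real N * (\<Sum>l\<in>A. (cmod (c l))\<^sup>2))"
  proof -
    have *: "c l * cnj (c l) * of_nat N = complex_of_real (real N * (cmod (c l))\<^sup>2)" for l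
      by (simp only: of_real_mult complex_norm_square) simp
    have "(\<Sum>l\<in>A. c l * cnj (c l) * of_nat N) = (\<Sum>l\<in>A. complex_of_real (real N * (cmod (c l))\<^sup>2))"
      by (rule sum.cong[OF refl]) (rule *)
    also have "\<dots> = complex_of_real (real N * (\<Sum>l\<in>A. (cmod (c l))\<^sup>2))"
      by (simp only: of_real_sum sum_distrib_left)
    finally show ?thesis .
  qed
  finally show ?thesis using of_real_eq_iff by blast
qed


lemma sin_ge_x_cos: assumes "0 \<le> x" "x \<le> pi" shows "x * cos x \<le> sin x"
proof -
  have "(\<lambda>t. sin t - t * cos t) 0 \<le> (\<lambda>t. sin t - t * cos t) x"
  proof (rule DERIV_nonneg_imp_nondecreasing[OF assms(1)])
    fix t assume t: "0 \<le> t" "t \<le> x"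
    have "DERIV (\<lambda>t. sin t - t * cos t) t :> t * sin t"
      by (auto intro!: derivative_eq_intros simp: algebra_simps)
    moreover have "t * sin t \<ge> 0" using t assms by (simp add: sin_ge_zero)
    ultimately show "\<exists>y. DERIV (\<lambda>t. sin t - t * cos t) t :> y \<and> y \<ge> 0" by blast
  qed
  then show ?thesis by simp
qed

lemma sin_ge_half: assumes "0 \<le> x" "x \<le> pi / 2" shows "x \<le> 2 * sin x"
proof -
  have s: "sin x = 2 * sin (x/2) * cos (x/2)"
    using sin_double[of "x/2"] by simp
  have c0: "cos (pi/4) \<le> cos (x/2)"
    using assms by (intro cos_monotone_0_pi_le) auto
  have "0 \<le> cos (pi/4)" by (simp add: cos_45)
  then have cpos: "0 \<le> cos (x/2)" using c0 by linarith
  have c2: "1/2 \<le> (cos (x/2))\<^sup>2"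
  proof -
    have "(cos (pi/4))\<^sup>2 \<le> (cos (x/2))\<^sup>2"
      using c0 \<open>0 \<le> cos (pi/4)\<close> by (intro power_mono) auto
    then show ?thesis by (simp add: cos_45 power_divide)
  qed
  have "x/2 * cos (x/2) \<le> sin (x/2)" using sin_ge_x_cos[of "x/2"] assms by simp
  then have "x/2 * cos (x/2) * cos (x/2) \<le> sin (x/2) * cos (x/2)"
    using cpos mult_right_mono by blast
  then have "x * (cos (x/2))\<^sup>2 \<le> sin x" using s by (simp add: power2_eq_square)
  moreover have "x * (1/2) \<le> x * (cos (x/2))\<^sup>2" using c2 assms(1) mult_left_mono by blast
  ultimately show ?thesis by simp
qed

lemma Re_ofr_mult: "Re (complex_of_real r * z) = r * Re z" by simp

definition cf :: "nat \<Rightarrow> nat \<Rightarrow> real \<Rightarrow> real \<Rightarrow> real" where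
  "cf s N len t = (1 / real N) * (\<Sum>l \<in> {- int (N div 2) .. int (N div 2)}.
      (1 / a_coef N l) * (of_int l * (2 * pi / len)) ^ s *
      cos (of_int l * (2 * pi / len) * t + real s * pi / 2))"

lemma gbasis_cf: "gbasis N xL len k x = cf 0 N len (x - (xL + real k * len / real N))"
proof -
  have e: "Re ((1 / complex_of_real (a_coef N l)) *
        exp (\<i> * of_int l * complex_of_real (2 * pi / len) * complex_of_real y))
      = (1 / a_coef N l) * cos (of_int l * (2 * pi / len) * y)" for l y
  proof -
    have "\<i> * of_int l * complex_of_real (2 * pi / len) * complex_of_real y
        = \<i> * complex_of_real (of_int l * (2 * pi / len) * y)" by simp
    then have "exp (\<i> * of_int l * complex_of_real (2 * pi / len) * complex_of_real y)
        = cis (of_int l * (2 * pi / len) * y)" by (simp only: cis_conv_exp)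
    moreover have "1 / complex_of_real (a_coef N l) = complex_of_real (1 / a_coef N l)" by simp
    ultimately show ?thesis by (simp only: Re_ofr_mult cis.sel)
  qed
  have "1 / complex_of_nat N = complex_of_real (1 / real N)" by simp
  then show ?thesis unfolding gbasis_def cf_def
    by (simp only: Re_ofr_mult Re_sum e) simp
qed

lemma term_deriv: "DERIV (\<lambda>x. w * A ^ s * cos (A * (x - c) + b)) x :> w * A ^ Suc s * cos (A * (x - c) + b + pi / 2)"
proof -
  have "DERIV (\<lambda>x. w * A ^ s * cos (A * (x - c) + b)) x :> w * A ^ s * (- sin (A * (x - c) + b) * A)"
    by (auto intro!: derivative_eq_intros)
  moreover have "w * A ^ s * (- sin (A * (x - c) + b) * A) = w * A ^ Suc s * cos (A * (x - c) + b + pi / 2)"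
    using minus_sin_cos_eq[of "A * (x - c) + b"] by simp
  ultimately show ?thesis by simp
qed

lemma cf_deriv: "DERIV (\<lambda>x. cf s N len (x - c)) x :> cf (Suc s) N len (x - c)"
proof -
  have e: "real (Suc s) * pi / 2 = real s * pi / 2 + pi / 2" by (simp add: field_simps)
  show ?thesis unfolding cf_def e add.assoc[symmetric]
    by (intro DERIV_cmult DERIV_sum term_deriv)
qed

lemma deriv_gbasis: "(deriv ^^ s) (gbasis N xL len k) = (\<lambda>x. cf s N len (x - (xL + real k * len / real N)))"
proof (induction s)
  case 0 then show ?case by (simp add: gbasis_cf fun_eq_iff)
next
  case (Suc s)
  show ?case by (simp add: Suc fun_eq_iff DERIV_imp_deriv[OF cf_deriv])
qed

lemma Dspec_cf: "Dspec s N xL len j k = cf s N len ((real j - real k) * len / real N)"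
  unfolding Dspec_def deriv_gbasis by (simp add: algebra_simps diff_divide_distrib)

lemma cf_neg: "cf s N len (- t) = (-1) ^ s * cf s N len t"
proof -
  let ?I = "{- int (N div 2) .. int (N div 2)}"
  have a: "a_coef N (- l) = a_coef N l" for l unfolding a_coef_def by simp
  have "(\<Sum>l \<in> ?I. (1 / a_coef N l) * (of_int l * (2 * pi / len)) ^ s *
      cos (of_int l * (2 * pi / len) * (- t) + real s * pi / 2)) =
      (\<Sum>l \<in> ?I. (1 / a_coef N (- l)) * (of_int (- l) * (2 * pi / len)) ^ s *
      cos (of_int (- l) * (2 * pi / len) * (- t) + real s * pi / 2))"
    by (rule sum.reindex_bij_witness[where i="\<lambda>l. - l" and j="\<lambda>l. - l"]) auto
  also have "\<dots> = (-1) ^ s * (\<Sum>l \<in> ?I. (1 / a_coef N l) * (of_int l * (2 * pi / len)) ^ s *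
      cos (of_int l * (2 * pi / len) * t + real s * pi / 2))"
  proof -
    have "(of_int (- l) * (2 * pi / len)) ^ s = (-1) ^ s * (of_int l * (2 * pi / len)) ^ s" for l :: int
      by (metis mult_minus_left of_int_minus power_minus)
    then show ?thesis by (simp add: a sum_distrib_left algebra_simps)
  qed
  finally show ?thesis unfolding cf_def by (simp add: algebra_simps)
qed

lemma Dspec_swap: "Dspec s N xL len k j = (-1) ^ s * Dspec s N xL len j k"
proof -
  have "(real k - real j) * len / real N = - ((real j - real k) * len / real N)"
    by (metis minus_diff_eq minus_divide_left mult_minus_left)
  then show ?thesis unfolding Dspec_cf by (simp add: cf_neg)
qed


lemma odd_sum_zero:
  fixes f :: "int \<Rightarrow> real"
  assumes "\<And>l. f (- l) = - f l"
  shows "(\<Sum>l\<in>{-b..b}. f l) = 0"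
proof -
  have "(\<Sum>l\<in>{-b..b}. f l) = (\<Sum>l\<in>{-b..b}. f (- l))"
    by (rule sum.reindex_bij_witness[where i="\<lambda>l. - l" and j="\<lambda>l. - l"]) auto
  also have "\<dots> = - (\<Sum>l\<in>{-b..b}. f l)" by (simp add: assms sum_negf)
  finally show ?thesis by linarith
qed

lemma ee_shift: assumes "int N dvd (a - b)" shows "ee N a = ee N b"
proof (cases "N = 0")
  case True then show ?thesis by (simp add: ee_def)
next
  case False
  obtain q where "a = b + int N * q" using assms by (metis add.commute diff_add_cancel dvdE)
  then show ?thesis using ee_multN[of N q] False by (simp add: ee_add)
qed

lemma ee_cos_sin: "ee N t = complex_of_real (cos (2 * pi * real_of_int t / real N))
   + \<i> * complex_of_real (sin (2 * pi * real_of_int t / real N))"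
  unfolding ee_def by (simp add: cis.ctr complex_eq_iff)

lemma dvd_small: assumes "int N dvd t" "\<bar>t\<bar> < int N" shows "t = 0"
proof (rule ccontr)
  assume "t \<noteq> 0"
  then have "\<bar>int N\<bar> \<le> \<bar>t\<bar>" using dvd_imp_le_int assms(1) by blast
  then show False using assms(2) by simp
qed

definition Lset :: "nat \<Rightarrow> int set" where
  "Lset N = {- (int (N div 2) - 1) .. int (N div 2) - 1}"

lemma D1_complex:
  assumes N: "N > 0" "even N" and len: "len \<noteq> 0"
  shows "complex_of_real (Dspec 1 N xL len j k) =
    (1 / of_nat N) * (\<Sum>l\<in>Lset N. \<i> * of_int l * complex_of_real (2 * pi / len) * ee N (l * (int j - int k)))"
proof -
  define d where "d = int j - int k"
  define th where "th l = 2 * pi * real_of_int (l * d) / real N" for l :: int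
  let ?I = "{- int (N div 2) .. int (N div 2)}"
  have targ: "of_int l * (2 * pi / len) * ((real j - real k) * len / real N) = th l" for l :: int
  proof -
    have "real N > 0" using N by simp
    then show ?thesis using len by (simp add: th_def d_def field_simps)
  qed
  have "Dspec 1 N xL len j k = (1 / real N) * (\<Sum>l\<in>?I. (1 / a_coef N l) * (of_int l * (2 * pi / len)) * (- sin (th l)))"
  proof -
    have "cos (th l + real 1 * pi / 2) = - sin (th l)" for l
      using minus_sin_cos_eq[of "th l"] by simp
    then show ?thesis unfolding Dspec_cf cf_def targ by simp
  qed
  also have "(\<Sum>l\<in>?I. (1 / a_coef N l) * (of_int l * (2 * pi / len)) * (- sin (th l)))
      = (\<Sum>l\<in>Lset N. (of_int l * (2 * pi / len)) * (- sin (th l)))"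
  proof (rule sum.mono_neutral_cong_right)
    show "Lset N \<subseteq> ?I" unfolding Lset_def by auto
    show "\<forall>l\<in>?I - Lset N. 1 / a_coef N l * (of_int l * (2 * pi / len)) * - sin (th l) = 0"
    proof
      fix l assume "l \<in> ?I - Lset N"
      then have "l = int (N div 2) \<or> l = - int (N div 2)" unfolding Lset_def by auto
      then obtain e :: int where "l * d = int N * e div 2" "even e \<or> True" "th l = pi * real_of_int e"
      proof -
        assume r: "\<And>e. l * d = int N * e div 2 \<Longrightarrow> even e \<or> True \<Longrightarrow> th l = pi * real_of_int e \<Longrightarrow> thesis"
        have "th l = pi * real_of_int (if l = int (N div 2) then d else - d)"
          using \<open>l = int (N div 2) \<or> l = - int (N div 2)\<close> N unfolding th_def
          by (auto simp: field_simps real_of_nat_div)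
        then show thesis using r[of "if l = int (N div 2) then d else - d"]
          using \<open>l = int (N div 2) \<or> l = - int (N div 2)\<close> N by (auto elim!: evenE)
      qed
      then have "sin (th l) = 0" by (simp add: sin_zero_iff_int2)
      then show "1 / a_coef N l * (of_int l * (2 * pi / len)) * - sin (th l) = 0" by simp
    qed
    show "1 / a_coef N l * (of_int l * (2 * pi / len)) * - sin (th l) = of_int l * (2 * pi / len) * - sin (th l)"
      if "l \<in> Lset N" for l
    proof -
      have "a_coef N l = 1" using that unfolding Lset_def a_coef_def by auto
      then show ?thesis by simp
    qed
  qed simp
  finally have D: "Dspec 1 N xL len j k = (1 / real N) * (\<Sum>l\<in>Lset N. (of_int l * (2 * pi / len)) * (- sin (th l)))" .
  have cs: "(\<Sum>l\<in>Lset N. (of_int l * (2 * pi / len)) * cos (th l)) = 0"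
    unfolding Lset_def by (rule odd_sum_zero) (simp add: th_def)
  have "(\<Sum>l\<in>Lset N. \<i> * of_int l * complex_of_real (2 * pi / len) * ee N (l * (int j - int k)))
     = (\<Sum>l\<in>Lset N. \<i> * complex_of_real ((of_int l * (2 * pi / len)) * cos (th l))
          - complex_of_real ((of_int l * (2 * pi / len)) * sin (th l)))"
    by (rule sum.cong[OF refl]) (simp add: ee_cos_sin th_def d_def algebra_simps)
  also have "\<dots> = \<i> * complex_of_real (\<Sum>l\<in>Lset N. (of_int l * (2 * pi / len)) * cos (th l))
      - complex_of_real (\<Sum>l\<in>Lset N. (of_int l * (2 * pi / len)) * sin (th l))"
    by (simp add: sum_subtractf sum_distrib_left)
  finally show ?thesis unfolding D cs by (simp add: sum_negf)
qed


lemma sum_nat_int: "(\<Sum>j<N. g (int j)) = (\<Sum>j\<in>{0..<int N}. g j)"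
  by (rule sum.reindex_bij_witness[where i="nat" and j="int"]) auto

lemma Lset_dist: assumes "l \<in> Lset N" "l' \<in> Lset N" "int N dvd (l - l')" shows "l = l'"
proof -
  have "\<bar>l - l'\<bar> < int N" using assms(1,2) unfolding Lset_def by auto
  then have "l - l' = 0" by (rule dvd_small[OF assms(3)])
  then show ?thesis by simp
qed

lemma Lset_window: assumes "even N" shows "Lset N \<subseteq> {- (int (N div 2) - 1) ..< - (int (N div 2) - 1) + int N}"
proof -
  from assms obtain m where "N = 2 * m" by (rule evenE)
  then show ?thesis unfolding Lset_def by auto
qed

lemma cmod_ee_1: "(cmod (ee N l - 1))\<^sup>2 = 4 * (sin (pi * real_of_int l / real N))\<^sup>2"
proof -
  define x where "x = pi * real_of_int l / real N"
  have "(cmod (ee N l - 1))\<^sup>2 = (cos (2 * x) - 1)\<^sup>2 + (sin (2 * x))\<^sup>2"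
    unfolding ee_def x_def cmod_def by (simp add: algebra_simps)
  also have "\<dots> = 2 - 2 * cos (2 * x)" using sin_cos_squared_add[of "2 * x"]
    by (simp add: power2_eq_square algebra_simps)
  also have "\<dots> = 4 * (sin x)\<^sup>2" by (simp add: cos_double_sin)
  finally show ?thesis unfolding x_def .
qed

lemma symb_bound:
  assumes N: "N > 0" "even N" and l: "l \<in> Lset N" and len: "len > 0"
  shows "(of_int l * (2 * pi / len))\<^sup>2 \<le> 4 * ((cmod (ee N l - 1))\<^sup>2 / (len / real N)\<^sup>2)"
proof -
  define x where "x = pi * \<bar>real_of_int l\<bar> / real N"
  have "\<bar>l\<bar> \<le> int N div 2" using l N unfolding Lset_def by auto
  then have "2 * \<bar>real_of_int l\<bar> \<le> real N" using N by (auto elim!: evenE)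
  then have x2: "x \<le> pi / 2" "0 \<le> x" using N unfolding x_def by (auto simp: field_simps)
  have s: "(sin (pi * real_of_int l / real N))\<^sup>2 = (sin x)\<^sup>2"
  proof (cases "l \<ge> 0")
    case True then show ?thesis by (simp add: x_def)
  next
    case False
    then have "pi * real_of_int l / real N = - x" by (simp add: x_def)
    then show ?thesis by simp
  qed
  have "x \<le> 2 * sin x" using sin_ge_half x2 by blast
  then have "x\<^sup>2 \<le> (2 * sin x)\<^sup>2" using x2 by (intro power_mono) auto
  then have "x\<^sup>2 \<le> 4 * (sin x)\<^sup>2" by (simp add: power_mult_distrib)
  moreover have "(of_int l * (2 * pi / len))\<^sup>2 = 4 * x\<^sup>2 * (real N / len)\<^sup>2"
  proof -
    have nz: "real N \<noteq> 0" using N by simp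
    have "4 * x\<^sup>2 * (real N / len)\<^sup>2 = 4 * (pi * \<bar>real_of_int l\<bar>)\<^sup>2 / len\<^sup>2"
      unfolding x_def power_divide using nz by simp
    also have "\<dots> = (of_int l * (2 * pi / len))\<^sup>2"
      by (simp add: power_mult_distrib power_divide)
    finally show ?thesis by simp
  qed
  moreover have "4 * ((cmod (ee N l - 1))\<^sup>2 / (len / real N)\<^sup>2) = 16 * (sin x)\<^sup>2 * (real N / len)\<^sup>2"
    unfolding cmod_ee_1 s by (simp add: power_divide)
  ultimately show ?thesis by (simp add: mult_right_mono)
qed


lemma sum_mod_shift: fixes N :: nat and g :: "nat \<Rightarrow> 'a::comm_monoid_add" assumes "N > 0" shows "(\<Sum>k<N. g ((k + 1) mod N)) = (\<Sum>k<N. g k)"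
proof (rule sum.reindex_bij_witness[where i="\<lambda>k. (k + N - 1) mod N" and j="\<lambda>k. (k + 1) mod N"])
  fix a assume a: "a \<in> {..<N}"
  show "((a + 1) mod N + N - 1) mod N = a"
  proof -
    have "((a + 1) mod N + N - 1) mod N = ((a + 1) mod N + (N - 1)) mod N" using assms by simp
    also have "\<dots> = (a + 1 + (N - 1)) mod N" by (simp add: mod_add_left_eq)
    also have "a + 1 + (N - 1) = a + N" using assms by simp
    finally show ?thesis using a by simp
  qed
next
  fix b assume b: "b \<in> {..<N}"
  show "((b + N - 1) mod N + 1) mod N = b"
  proof -
    have "((b + N - 1) mod N + 1) mod N = (b + N - 1 + 1) mod N" by (simp add: mod_Suc_eq)
    also have "b + N - 1 + 1 = b + N" using assms by simp
    finally show ?thesis using b by simp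
  qed
qed (use assms in auto)

lemma step1:
  assumes N: "N > 0" "even N" and len: "len \<noteq> 0"
  shows "complex_of_real (\<Sum>k<N. Dspec 1 N xL len j k * f k) =
    (\<Sum>l\<in>Lset N. (\<i> * of_int l * complex_of_real (2 * pi / len) *
        (\<Sum>k<N. complex_of_real (f k) * ee N (- (l * int k))) / of_nat N) * ee N (l * int j))"
proof -
  have e: "ee N (l * (int j - int k)) = ee N (l * int j) * ee N (- (l * int k))" for l k
    by (simp add: algebra_simps flip: ee_add)
  have "complex_of_real (\<Sum>k<N. Dspec 1 N xL len j k * f k) =
     (\<Sum>k<N. complex_of_real (Dspec 1 N xL len j k) * complex_of_real (f k))" by simp
  also have "\<dots> = (\<Sum>k<N. \<Sum>l\<in>Lset N. (1 / of_nat N) * (\<i> * of_int l * complex_of_real (2 * pi / len) *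
        ee N (l * (int j - int k))) * complex_of_real (f k))"
    unfolding D1_complex[OF N len] by (simp only: sum_distrib_left sum_distrib_right)
  also have "\<dots> = (\<Sum>l\<in>Lset N. \<Sum>k<N. (\<i> * of_int l * complex_of_real (2 * pi / len) / of_nat N * ee N (l * int j)) *
        (complex_of_real (f k) * ee N (- (l * int k))))"
    by (subst sum.swap) (simp only: e, simp add: algebra_simps)
  also have "\<dots> = (\<Sum>l\<in>Lset N. (\<i> * of_int l * complex_of_real (2 * pi / len) *
        (\<Sum>k<N. complex_of_real (f k) * ee N (- (l * int k))) / of_nat N) * ee N (l * int j))"
    by (simp add: sum_distrib_left sum_distrib_right sum_divide_distrib algebra_simps)
  finally show ?thesis .
qed

lemma step3:
  assumes N: "N > 0"
  shows "(\<Sum>k<N. complex_of_real ((f ((k + 1) mod N) - f k) / h) * ee N (- (l * int k)))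
     = ((ee N l - 1) / complex_of_real h) * (\<Sum>k<N. complex_of_real (f k) * ee N (- (l * int k)))"
proof -
  have sh: "ee N (- (l * int k)) = ee N l * ee N (- (l * int ((k + 1) mod N)))" for k
  proof -
    have "int N dvd (- (l * int k) - (l + - (l * int ((k + 1) mod N))))"
    proof -
      have m: "int ((k + 1) mod N) = int (k + 1) mod int N" by (rule of_nat_mod)
      have "int N dvd (int (k + 1) mod int N - int (k + 1))"
        using mod_eq_dvd_iff[of "int (k + 1) mod int N" "int N" "int (k + 1)"] by simp
      then have "int N dvd (int ((k + 1) mod N) - int (k + 1))" by (simp only: m)
      then have "int N dvd l * (int ((k + 1) mod N) - int (k + 1))" by simp
      moreover have "- (l * int k) - (l + - (l * int ((k + 1) mod N))) = l * (int ((k + 1) mod N) - int (k + 1))"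
        by (simp add: algebra_simps)
      ultimately show ?thesis by simp
    qed
    then have "ee N (- (l * int k)) = ee N (l + - (l * int ((k + 1) mod N)))" by (rule ee_shift)
    then show ?thesis by (simp only: ee_add)
  qed
  have "(\<Sum>k<N. complex_of_real (f ((k + 1) mod N)) * ee N (- (l * int k)))
      = ee N l * (\<Sum>k<N. complex_of_real (f ((k + 1) mod N)) * ee N (- (l * int ((k + 1) mod N))))"
  proof -
    have "(\<Sum>k<N. complex_of_real (f ((k + 1) mod N)) * ee N (- (l * int k)))
      = (\<Sum>k<N. ee N l * (complex_of_real (f ((k + 1) mod N)) * ee N (- (l * int ((k + 1) mod N)))))"
    proof (rule sum.cong[OF refl])
      fix k show "complex_of_real (f ((k + 1) mod N)) * ee N (- (l * int k)) =
        ee N l * (complex_of_real (f ((k + 1) mod N)) * ee N (- (l * int ((k + 1) mod N))))"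
        using sh[of k] by simp
    qed
    then show ?thesis by (simp only: sum_distrib_left)
  qed
  also have "\<dots> = ee N l * (\<Sum>k<N. complex_of_real (f k) * ee N (- (l * int k)))"
    using sum_mod_shift[OF N, of "\<lambda>k. complex_of_real (f k) * ee N (- (l * int k))"] by simp
  finally have A: "(\<Sum>k<N. complex_of_real (f ((k + 1) mod N)) * ee N (- (l * int k))) =
     ee N l * (\<Sum>k<N. complex_of_real (f k) * ee N (- (l * int k)))" .
  have "(\<Sum>k<N. complex_of_real ((f ((k + 1) mod N) - f k) / h) * ee N (- (l * int k)))
      = ((\<Sum>k<N. complex_of_real (f ((k + 1) mod N)) * ee N (- (l * int k)))
          - (\<Sum>k<N. complex_of_real (f k) * ee N (- (l * int k)))) / complex_of_real h"
    by (simp add: sum_subtractf sum_divide_distrib diff_divide_distrib algebra_simps)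
  also have "\<dots> = ((ee N l - 1) / complex_of_real h) * (\<Sum>k<N. complex_of_real (f k) * ee N (- (l * int k)))"
    unfolding A by (simp add: algebra_simps diff_divide_distrib)
  finally show ?thesis .
qed

lemma step4:
  assumes N: "N > 0" "even N"
  shows "(\<Sum>l\<in>Lset N. (cmod (\<Sum>k<N. complex_of_real (y k) * ee N (- (l * int k))))\<^sup>2)
     \<le> real N * (\<Sum>k<N. (y k)\<^sup>2)"
proof -
  let ?a = "- (int (N div 2) - 1)"
  have c: "cmod (\<Sum>k<N. complex_of_real (y k) * ee N (- (l * int k)))
      = cmod (\<Sum>k\<in>{0..<int N}. complex_of_real (y (nat k)) * ee N (k * l))" for l
  proof -
    have "cmod (\<Sum>k<N. complex_of_real (y k) * ee N (- (l * int k)))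
       = cmod (cnj (\<Sum>k<N. complex_of_real (y k) * ee N (- (l * int k))))" by (rule complex_mod_cnj[symmetric])
    also have "cnj (\<Sum>k<N. complex_of_real (y k) * ee N (- (l * int k))) = (\<Sum>k<N. complex_of_real (y k) * ee N (int k * l))"
      by (simp add: ee_cnj mult.commute)
    also have "\<dots> = (\<Sum>k\<in>{0..<int N}. complex_of_real (y (nat k)) * ee N (k * l))"
      using sum_nat_int[of "\<lambda>k. complex_of_real (y (nat k)) * ee N (k * l)" N] by simp
    finally show ?thesis .
  qed
  have "(\<Sum>l\<in>Lset N. (cmod (\<Sum>k<N. complex_of_real (y k) * ee N (- (l * int k))))\<^sup>2)
      \<le> (\<Sum>l\<in>{?a..<?a + int N}. (cmod (\<Sum>k<N. complex_of_real (y k) * ee N (- (l * int k))))\<^sup>2)"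
    by (rule sum_mono2) (use Lset_window[OF N(2)] in auto)
  also have "\<dots> = (\<Sum>l\<in>{?a..<?a + int N}. (cmod (\<Sum>k\<in>{0..<int N}. complex_of_real (y (nat k)) * ee N (k * l)))\<^sup>2)"
    by (simp only: c)
  also have "\<dots> = real N * (\<Sum>k\<in>{0..<int N}. (cmod (complex_of_real (y (nat k))))\<^sup>2)"
  proof (rule parseval_gen[OF N(1)])
    fix l l' assume "l \<in> {0..<int N}" "l' \<in> {0..<int N}" "int N dvd (l - l')"
    moreover then have "\<bar>l - l'\<bar> < int N" by auto
    ultimately have "l - l' = 0" using dvd_small by blast
    then show "l = l'" by simp
  qed simp
  also have "\<dots> = real N * (\<Sum>k<N. (y k)\<^sup>2)"
    using sum_nat_int[of "\<lambda>k. (y (nat k))\<^sup>2" N] by simp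
  finally show ?thesis .
qed


lemma spec1d:
  assumes N: "N > 0" "even N" and len: "len > 0"
  shows "(\<Sum>j<N. (\<Sum>k<N. Dspec 1 N xL len j k * f k)\<^sup>2)
    \<le> 4 * (\<Sum>j<N. ((f ((j + 1) mod N) - f j) / (len / real N))\<^sup>2)"
proof -
  define mu where "mu = 2 * pi / len"
  define h where "h = len / real N"
  define F where "F l = (\<Sum>k<N. complex_of_real (f k) * ee N (- (l * int k)))" for l
  define c where "c l = \<i> * of_int l * complex_of_real mu * F l / of_nat N" for l
  define y where "y k = (f ((k + 1) mod N) - f k) / h" for k
  have lenz: "len \<noteq> 0" using len by simp
  have s1: "complex_of_real (\<Sum>k<N. Dspec 1 N xL len j k * f k) = (\<Sum>l\<in>Lset N. c l * ee N (l * int j))" for j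
    unfolding c_def F_def mu_def using step1[OF N lenz] by simp
  have "(\<Sum>j<N. (\<Sum>k<N. Dspec 1 N xL len j k * f k)\<^sup>2)
      = (\<Sum>j<N. (cmod (complex_of_real (\<Sum>k<N. Dspec 1 N xL len j k * f k)))\<^sup>2)"
    by (simp only: norm_of_real power2_abs)
  also have "\<dots> = (\<Sum>j<N. (cmod (\<Sum>l\<in>Lset N. c l * ee N (l * int j)))\<^sup>2)"
    by (simp only: s1)
  also have "\<dots> = (\<Sum>j\<in>{0..<int N}. (cmod (\<Sum>l\<in>Lset N. c l * ee N (l * j)))\<^sup>2)"
    by (rule sum_nat_int)
  also have "\<dots> = real N * (\<Sum>l\<in>Lset N. (cmod (c l))\<^sup>2)"
    using parseval_gen[OF N(1), of "Lset N" c 0] Lset_dist by (simp add: Lset_def)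
  also have "\<dots> \<le> real N * (\<Sum>l\<in>Lset N. 4 * (cmod (\<Sum>k<N. complex_of_real (y k) * ee N (- (l * int k))))\<^sup>2 / (real N)\<^sup>2)"
  proof (intro mult_left_mono sum_mono)
    fix l assume l: "l \<in> Lset N"
    have Y: "(\<Sum>k<N. complex_of_real (y k) * ee N (- (l * int k))) = ((ee N l - 1) / complex_of_real h) * F l"
      unfolding y_def F_def by (rule step3[OF N(1)])
    have "(cmod (c l))\<^sup>2 = (of_int l * mu)\<^sup>2 * (cmod (F l))\<^sup>2 / (real N)\<^sup>2"
      unfolding c_def by (simp add: norm_mult norm_divide power_mult_distrib power_divide)
    also have "\<dots> \<le> 4 * ((cmod (ee N l - 1))\<^sup>2 / h\<^sup>2) * (cmod (F l))\<^sup>2 / (real N)\<^sup>2"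
      using symb_bound[OF N l len] unfolding mu_def h_def
      by (intro divide_right_mono mult_right_mono) auto
    also have "\<dots> = 4 * (cmod (\<Sum>k<N. complex_of_real (y k) * ee N (- (l * int k))))\<^sup>2 / (real N)\<^sup>2"
      unfolding Y by (simp add: norm_mult norm_divide power_mult_distrib power_divide)
    finally show "(cmod (c l))\<^sup>2 \<le> 4 * (cmod (\<Sum>k<N. complex_of_real (y k) * ee N (- (l * int k))))\<^sup>2 / (real N)\<^sup>2" .
  qed simp
  also have "\<dots> = 4 / real N * (\<Sum>l\<in>Lset N. (cmod (\<Sum>k<N. complex_of_real (y k) * ee N (- (l * int k))))\<^sup>2)"
    using N by (simp add: sum_distrib_left sum_divide_distrib power2_eq_square)
  also have "\<dots> \<le> 4 / real N * (real N * (\<Sum>k<N. (y k)\<^sup>2))"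
    by (intro mult_left_mono step4[OF N]) auto
  also have "\<dots> = 4 * (\<Sum>j<N. ((f ((j + 1) mod N) - f j) / (len / real N))\<^sup>2)"
    using N by (simp add: y_def h_def)
  finally show ?thesis .
qed


lemma sum_split:
  fixes g :: "nat \<Rightarrow> 'a::comm_monoid_add"
  shows "(\<Sum>m<N1 * N2. g m) = (\<Sum>i2<N2. \<Sum>i1<N1. g (i1 + N1 * i2))"
proof (induction N2)
  case 0 then show ?case by simp
next
  case (Suc n)
  have "{..<N1 * Suc n} = {..<N1 * n} \<union> {N1 * n..<N1 * n + N1}" by auto
  then have "(\<Sum>m<N1 * Suc n. g m) = (\<Sum>m<N1 * n. g m) + (\<Sum>m\<in>{N1 * n..<N1 * n + N1}. g m)"
    by (simp add: sum.union_disjoint ivl_disj_int)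
  also have "(\<Sum>m\<in>{N1 * n..<N1 * n + N1}. g m) = (\<Sum>i1<N1. g (i1 + N1 * n))"
    by (rule sum.reindex_bij_witness[where i="\<lambda>i. i + N1 * n" and j="\<lambda>m. m - N1 * n"]) auto
  finally show ?case using Suc by simp
qed

lemma idx_mod: "(i1::nat) < N1 \<Longrightarrow> (i1 + N1 * i2) mod N1 = i1" by (cases "N1 = 0") auto
lemma idx_div: "(i1::nat) < N1 \<Longrightarrow> (i1 + N1 * i2) div N1 = i2" by (cases "N1 = 0") auto

lemma nat_mod_plus1: "N > 0 \<Longrightarrow> nat ((int i + 1) mod int N) = (i + 1) mod N"
  by (metis nat_int of_nat_Suc of_nat_mod Suc_eq_plus1 add.commute)

lemma nat_mod_minus1: assumes "N > 0" "i < N" shows "nat ((int i - 1) mod int N) = (i + N - 1) mod N"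
proof -
  have "int (i + N - 1) = (int i - 1) + int N" using assms by simp
  then have "int ((i + N - 1) mod N) = (int i - 1) mod int N"
    by (metis mod_add_self2 of_nat_mod)
  then show ?thesis by (metis nat_int)
qed

lemma nat_mod_same: "i < N \<Longrightarrow> nat (int i mod int N) = i"
  by (simp add: nat_mod_distrib)

definition px :: "nat \<Rightarrow> nat \<Rightarrow> nat" where "px N i = (i + 1) mod N"
definition mx :: "nat \<Rightarrow> nat \<Rightarrow> nat" where "mx N i = (i + N - 1) mod N"

lemma of_grid_at: "i1 < N1 \<Longrightarrow> of_grid N1 F (i1 + N1 * i2) = F (int i1) (int i2)"
  unfolding of_grid_def by (simp add: idx_mod idx_div)

lemma gval_at: "i1 < N1 \<Longrightarrow> i2 < N2 \<Longrightarrow> gval N1 N2 X (int i1) (int i2) = X (i1 + N1 * i2)"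
  unfolding gval_def by (simp add: nat_mod_same)

lemma gval_px1: "i1 < N1 \<Longrightarrow> i2 < N2 \<Longrightarrow> gval N1 N2 X (int i1 + 1) (int i2) = X (px N1 i1 + N1 * i2)"
  unfolding gval_def px_def by (simp add: nat_mod_same nat_mod_plus1)

lemma gval_px2: "i1 < N1 \<Longrightarrow> i2 < N2 \<Longrightarrow> gval N1 N2 X (int i1) (int i2 + 1) = X (i1 + N1 * px N2 i2)"
  unfolding gval_def px_def by (simp add: nat_mod_same nat_mod_plus1)

lemma gval_mx1: "i1 < N1 \<Longrightarrow> i2 < N2 \<Longrightarrow> gval N1 N2 X (int i1 - 1) (int i2) = X (mx N1 i1 + N1 * i2)"
  unfolding gval_def mx_def by (simp add: nat_mod_same nat_mod_minus1)

lemma gval_mx2: "i1 < N1 \<Longrightarrow> i2 < N2 \<Longrightarrow> gval N1 N2 X (int i1) (int i2 - 1) = X (i1 + N1 * mx N2 i2)"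
  unfolding gval_def mx_def by (simp add: nat_mod_same nat_mod_minus1)

lemma dxp_at: "i1 < N1 \<Longrightarrow> i2 < N2 \<Longrightarrow>
   dxp h1 N1 N2 X (i1 + N1 * i2) = (X (px N1 i1 + N1 * i2) - X (i1 + N1 * i2)) / h1"
  unfolding dxp_def by (simp add: of_grid_at gval_px1 gval_at)

lemma dyp_at: "i1 < N1 \<Longrightarrow> i2 < N2 \<Longrightarrow>
   dyp h2 N1 N2 X (i1 + N1 * i2) = (X (i1 + N1 * px N2 i2) - X (i1 + N1 * i2)) / h2"
  unfolding dyp_def by (simp add: of_grid_at gval_px2 gval_at)

lemma lap_at: "i1 < N1 \<Longrightarrow> i2 < N2 \<Longrightarrow>
   lap_h h1 h2 N1 N2 X (i1 + N1 * i2) =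
     (X (px N1 i1 + N1 * i2) - 2 * X (i1 + N1 * i2) + X (mx N1 i1 + N1 * i2)) / h1\<^sup>2
   + (X (i1 + N1 * px N2 i2) - 2 * X (i1 + N1 * i2) + X (i1 + N1 * mx N2 i2)) / h2\<^sup>2"
  unfolding lap_h_def by (simp add: of_grid_at gval_px1 gval_px2 gval_mx1 gval_mx2 gval_at)

lemma px_lt: "N > 0 \<Longrightarrow> px N i < N" unfolding px_def by simp
lemma mx_lt: "N > 0 \<Longrightarrow> mx N i < N" unfolding mx_def by simp

lemma mat_vec_kron_x:
  assumes "i1 < N1" "i2 < N2"
  shows "mat_vec (N1 * N2) (kron N1 idm D) X (i1 + N1 * i2) = (\<Sum>k1<N1. D i1 k1 * X (k1 + N1 * i2))"
proof -
  have "mat_vec (N1 * N2) (kron N1 idm D) X (i1 + N1 * i2)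
     = (\<Sum>k2<N2. \<Sum>k1<N1. idm i2 k2 * D i1 k1 * X (k1 + N1 * k2))"
    unfolding mat_vec_def kron_def using assms by (simp add: sum_split)
  also have "\<dots> = (\<Sum>k2<N2. if k2 = i2 then (\<Sum>k1<N1. D i1 k1 * X (k1 + N1 * i2)) else 0)"
    by (rule sum.cong[OF refl]) (simp add: idm_def)
  also have "\<dots> = (\<Sum>k1<N1. D i1 k1 * X (k1 + N1 * i2))" using assms by (simp add: sum.delta)
  finally show ?thesis .
qed

lemma mat_vec_kron_y:
  assumes "i1 < N1" "i2 < N2"
  shows "mat_vec (N1 * N2) (kron N1 D idm) X (i1 + N1 * i2) = (\<Sum>k2<N2. D i2 k2 * X (i1 + N1 * k2))"
proof -
  have "mat_vec (N1 * N2) (kron N1 D idm) X (i1 + N1 * i2)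
     = (\<Sum>k2<N2. \<Sum>k1<N1. D i2 k2 * idm i1 k1 * X (k1 + N1 * k2))"
    unfolding mat_vec_def kron_def using assms by (simp add: sum_split)
  also have "\<dots> = (\<Sum>k2<N2. D i2 k2 * X (i1 + N1 * k2))"
  proof (rule sum.cong[OF refl])
    fix k2
    have "(\<Sum>k1<N1. D i2 k2 * idm i1 k1 * X (k1 + N1 * k2)) =
       (\<Sum>k1<N1. if k1 = i1 then D i2 k2 * X (i1 + N1 * k2) else 0)"
      by (rule sum.cong[OF refl]) (auto simp: idm_def)
    then show "(\<Sum>k1<N1. D i2 k2 * idm i1 k1 * X (k1 + N1 * k2)) = D i2 k2 * X (i1 + N1 * k2)"
      using assms by (simp add: sum.delta')
  qed
  finally show ?thesis .
qed


lemma sum_sq_le: "(a + b)\<^sup>2 \<le> 2 * a\<^sup>2 + 2 * (b::real)\<^sup>2"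
proof -
  have "0 \<le> (a - b)\<^sup>2" by simp
  moreover have "(a - b)\<^sup>2 = a\<^sup>2 - 2 * a * b + b\<^sup>2" "(a + b)\<^sup>2 = a\<^sup>2 + 2 * a * b + b\<^sup>2"
    by (simp_all add: power2_eq_square algebra_simps)
  ultimately show ?thesis by linarith
qed

lemma specL:
  assumes N: "N1 > 0" "N2 > 0" "even N1" "even N2" and l: "xL < xR" "yL < yR"
  shows "(\<Sum>m<N1 * N2. (mat_vec (N1 * N2) (Lmat xL xR yL yR N1 N2) X m)\<^sup>2)
    \<le> 8 * ((\<Sum>m<N1 * N2. (dxp ((xR - xL) / real N1) N1 N2 X m)\<^sup>2)
           + (\<Sum>m<N1 * N2. (dyp ((yR - yL) / real N2) N1 N2 X m)\<^sup>2))"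
proof -
  let ?n = "N1 * N2"
  let ?Dx = "Dspec 1 N1 xL (xR - xL)" and ?Dy = "Dspec 1 N2 yL (yR - yL)"
  define Ax where "Ax m = mat_vec ?n (kron N1 idm ?Dx) X m" for m
  define Ay where "Ay m = mat_vec ?n (kron N1 ?Dy idm) X m" for m
  have LA: "mat_vec ?n (Lmat xL xR yL yR N1 N2) X m = Ax m + Ay m" for m
    unfolding Ax_def Ay_def mat_vec_def Lmat_def by (simp add: sum.distrib distrib_right)
  have x: "(\<Sum>m<?n. (Ax m)\<^sup>2) \<le> 4 * (\<Sum>m<?n. (dxp ((xR - xL) / real N1) N1 N2 X m)\<^sup>2)"
  proof -
    have "(\<Sum>m<?n. (Ax m)\<^sup>2) = (\<Sum>i2<N2. \<Sum>i1<N1. (\<Sum>k1<N1. ?Dx i1 k1 * X (k1 + N1 * i2))\<^sup>2)"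
      unfolding sum_split Ax_def by (intro sum.cong refl) (simp add: mat_vec_kron_x)
    also have "\<dots> \<le> (\<Sum>i2<N2. 4 * (\<Sum>i1<N1. ((X ((i1 + 1) mod N1 + N1 * i2) - X (i1 + N1 * i2)) / ((xR - xL) / real N1))\<^sup>2))"
      by (intro sum_mono spec1d) (use N l in auto)
    also have "\<dots> = 4 * (\<Sum>m<?n. (dxp ((xR - xL) / real N1) N1 N2 X m)\<^sup>2)"
      unfolding sum_split sum_distrib_left by (intro sum.cong refl) (simp add: dxp_at px_def)
    finally show ?thesis .
  qed
  have y: "(\<Sum>m<?n. (Ay m)\<^sup>2) \<le> 4 * (\<Sum>m<?n. (dyp ((yR - yL) / real N2) N1 N2 X m)\<^sup>2)"
  proof -
    have "(\<Sum>m<?n. (Ay m)\<^sup>2) = (\<Sum>i2<N2. \<Sum>i1<N1. (\<Sum>k2<N2. ?Dy i2 k2 * X (i1 + N1 * k2))\<^sup>2)"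
      unfolding sum_split Ay_def by (intro sum.cong refl) (simp add: mat_vec_kron_y)
    also have "\<dots> = (\<Sum>i1<N1. \<Sum>i2<N2. (\<Sum>k2<N2. ?Dy i2 k2 * X (i1 + N1 * k2))\<^sup>2)"
      by (rule sum.swap)
    also have "\<dots> \<le> (\<Sum>i1<N1. 4 * (\<Sum>i2<N2. ((X (i1 + N1 * ((i2 + 1) mod N2)) - X (i1 + N1 * i2)) / ((yR - yL) / real N2))\<^sup>2))"
      by (intro sum_mono spec1d) (use N l in auto)
    also have "\<dots> = 4 * (\<Sum>i2<N2. \<Sum>i1<N1. (dyp ((yR - yL) / real N2) N1 N2 X (i1 + N1 * i2))\<^sup>2)"
      unfolding sum_distrib_left by (subst sum.swap) (intro sum.cong refl, simp add: dyp_at px_def)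
    also have "\<dots> = 4 * (\<Sum>m<?n. (dyp ((yR - yL) / real N2) N1 N2 X m)\<^sup>2)"
      unfolding sum_split ..
    finally show ?thesis .
  qed
  have "(\<Sum>m<?n. (mat_vec ?n (Lmat xL xR yL yR N1 N2) X m)\<^sup>2) \<le> (\<Sum>m<?n. 2 * (Ax m)\<^sup>2 + 2 * (Ay m)\<^sup>2)"
    unfolding LA by (intro sum_mono sum_sq_le)
  also have "\<dots> = 2 * (\<Sum>m<?n. (Ax m)\<^sup>2) + 2 * (\<Sum>m<?n. (Ay m)\<^sup>2)"
    by (simp add: sum.distrib sum_distrib_left)
  finally have "(\<Sum>m<?n. (mat_vec ?n (Lmat xL xR yL yR N1 N2) X m)\<^sup>2) \<le> 2 * (\<Sum>m<?n. (Ax m)\<^sup>2) + 2 * (\<Sum>m<?n. (Ay m)\<^sup>2)" .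
  then show ?thesis using x y unfolding distrib_left by linarith
qed


lemma mx_px: "N > 0 \<Longrightarrow> i < N \<Longrightarrow> mx N (px N i) = i"
proof -
  assume N: "N > 0" and i: "i < N"
  have "((i + 1) mod N + N - 1) mod N = ((i + 1) mod N + (N - 1)) mod N" using N by simp
  also have "\<dots> = (i + 1 + (N - 1)) mod N" by (simp add: mod_add_left_eq)
  also have "i + 1 + (N - 1) = i + N" using N by simp
  finally show ?thesis using i unfolding mx_def px_def by simp
qed

lemma sum_px: "N > 0 \<Longrightarrow> (\<Sum>i<N. g (px N i)) = (\<Sum>i<N. (g i :: real))"
  unfolding px_def using sum_mod_shift by simp

lemma sbp1d:
  fixes A B :: "nat \<Rightarrow> real"
  assumes N: "N > 0"
  shows "(\<Sum>i<N. A i * ((B (px N i) - 2 * B i + B (mx N i)) / h\<^sup>2))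
       = - (\<Sum>i<N. ((A (px N i) - A i) / h) * ((B (px N i) - B i) / h))"
proof -
  have s1: "(\<Sum>i<N. A i * B (mx N i)) = (\<Sum>i<N. A (px N i) * B i)"
  proof -
    have "(\<Sum>i<N. A i * B (mx N i)) = (\<Sum>i<N. A (px N i) * B (mx N (px N i)))"
      using sum_px[OF N, of "\<lambda>i. A i * B (mx N i)"] by simp
    also have "\<dots> = (\<Sum>i<N. A (px N i) * B i)"
      by (rule sum.cong[OF refl]) (simp add: mx_px[OF N])
    finally show ?thesis .
  qed
  have s2: "(\<Sum>i<N. A (px N i) * B (px N i)) = (\<Sum>i<N. A i * B i)"
    using sum_px[OF N, of "\<lambda>i. A i * B i"] by simp
  have "(\<Sum>i<N. A i * ((B (px N i) - 2 * B i + B (mx N i)) / h\<^sup>2))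
     = ((\<Sum>i<N. A i * B (px N i)) - 2 * (\<Sum>i<N. A i * B i) + (\<Sum>i<N. A i * B (mx N i))) / h\<^sup>2"
  proof -
    have e: "A i * ((B (px N i) - 2 * B i + B (mx N i)) / h\<^sup>2) = (A i * B (px N i) - 2 * (A i * B i) + A i * B (mx N i)) / h\<^sup>2" for i
      by (simp add: right_diff_distrib distrib_left)
    show ?thesis unfolding e
      by (simp only: sum_divide_distrib[symmetric] sum.distrib sum_subtractf sum_distrib_left)
  qed
  also have "\<dots> = - ((\<Sum>i<N. A (px N i) * B (px N i)) - (\<Sum>i<N. A (px N i) * B i)
        - (\<Sum>i<N. A i * B (px N i)) + (\<Sum>i<N. A i * B i)) / h\<^sup>2"
    unfolding s1 s2 by (simp add: algebra_simps)
  also have "\<dots> = - (\<Sum>i<N. ((A (px N i) - A i) / h) * ((B (px N i) - B i) / h))"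
  proof -
    have e: "((A (px N i) - A i) / h) * ((B (px N i) - B i) / h) =
       (A (px N i) * B (px N i) - A (px N i) * B i - A i * B (px N i) + A i * B i) / h\<^sup>2" for i
      by (simp add: power2_eq_square algebra_simps)
    show ?thesis unfolding e
      by (simp only: sum_divide_distrib[symmetric] sum.distrib sum_subtractf)
  qed
  finally show ?thesis .
qed

lemma telesc: "k \<le> j \<Longrightarrow> g j - g k = (\<Sum>i\<in>{k..<j}. g (Suc i) - (g i :: real))"
  by (induction j) (auto simp: le_Suc_eq)

lemma sup1d_pair:
  fixes g :: "nat \<Rightarrow> real"
  assumes N: "N > 0" and j: "j < N" and k: "k < N"
  shows "\<bar>g j - g k\<bar> \<le> (\<Sum>i<N. \<bar>g (px N i) - g i\<bar>)"
proof -
  define g' where "g' i = g (i mod N)" for i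
  have gp: "g' (Suc i) = g (px N i)" for i unfolding g'_def px_def by simp
  have gi: "i < N \<Longrightarrow> g' i = g i" for i unfolding g'_def by simp
  have tv: "(\<Sum>i\<in>I. \<bar>g' (Suc i) - g' i\<bar>) \<le> (\<Sum>i<N. \<bar>g (px N i) - g i\<bar>)" if "I \<subseteq> {..<N}" for I
  proof -
    have "(\<Sum>i\<in>I. \<bar>g' (Suc i) - g' i\<bar>) = (\<Sum>i\<in>I. \<bar>g (px N i) - g i\<bar>)"
      by (rule sum.cong[OF refl]) (use that in \<open>auto simp: gp gi\<close>)
    also have "\<dots> \<le> (\<Sum>i<N. \<bar>g (px N i) - g i\<bar>)"
      by (rule sum_mono2) (use that in auto)
    finally show ?thesis .
  qed
  show ?thesis
  proof (cases "k \<le> j")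
    case True
    have "\<bar>g j - g k\<bar> = \<bar>\<Sum>i\<in>{k..<j}. g' (Suc i) - g' i\<bar>"
      using telesc[OF True, of g'] gi j k by simp
    also have "\<dots> \<le> (\<Sum>i\<in>{k..<j}. \<bar>g' (Suc i) - g' i\<bar>)" by (rule sum_abs)
    also have "\<dots> \<le> (\<Sum>i<N. \<bar>g (px N i) - g i\<bar>)" by (rule tv) (use j in auto)
    finally show ?thesis .
  next
    case False
    have a: "g j - g 0 = (\<Sum>i\<in>{0..<j}. g' (Suc i) - g' i)"
      using telesc[of 0 j g'] gi j N by simp
    have b: "g 0 - g k = (\<Sum>i\<in>{k..<N}. g' (Suc i) - g' i)"
    proof -
      have "g' N - g' k = (\<Sum>i\<in>{k..<N}. g' (Suc i) - g' i)" using telesc[of k N g'] k by simp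
      moreover have "g' N = g 0" unfolding g'_def by simp
      ultimately show ?thesis using gi k by simp
    qed
    have "\<bar>g j - g k\<bar> = \<bar>(\<Sum>i\<in>{0..<j}. g' (Suc i) - g' i) + (\<Sum>i\<in>{k..<N}. g' (Suc i) - g' i)\<bar>"
      using a b by simp
    also have "\<dots> = \<bar>\<Sum>i\<in>{0..<j} \<union> {k..<N}. g' (Suc i) - g' i\<bar>"
      using False by (subst sum.union_disjoint) auto
    also have "\<dots> \<le> (\<Sum>i\<in>{0..<j} \<union> {k..<N}. \<bar>g' (Suc i) - g' i\<bar>)" by (rule sum_abs)
    also have "\<dots> \<le> (\<Sum>i<N. \<bar>g (px N i) - g i\<bar>)" by (rule tv) (use j in auto)
    finally show ?thesis .
  qed
qed

lemma sup1d:
  fixes g :: "nat \<Rightarrow> real"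
  assumes N: "N > 0" and j: "j < N"
  shows "\<bar>g j\<bar> \<le> (\<Sum>k<N. \<bar>g k\<bar>) / real N + (\<Sum>i<N. \<bar>g (px N i) - g i\<bar>)"
proof -
  let ?T = "(\<Sum>i<N. \<bar>g (px N i) - g i\<bar>)"
  have "\<bar>g j\<bar> \<le> \<bar>g k\<bar> + ?T" if "k < N" for k
    using sup1d_pair[OF N j that, of g] by linarith
  then have "(\<Sum>k<N. \<bar>g j\<bar>) \<le> (\<Sum>k<N. \<bar>g k\<bar> + ?T)" by (intro sum_mono) auto
  then have "real N * \<bar>g j\<bar> \<le> (\<Sum>k<N. \<bar>g k\<bar>) + real N * ?T" by (simp add: sum.distrib)
  then show ?thesis using N by (simp add: field_simps)
qed


lemma lap_split:
  assumes N: "N1 > 0" "N2 > 0"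
  shows "(\<Sum>m<N1 * N2. A m * lap_h h1 h2 N1 N2 E m) =
    (\<Sum>i2<N2. \<Sum>i1<N1. A (i1 + N1 * i2) *
        ((E (px N1 i1 + N1 * i2) - 2 * E (i1 + N1 * i2) + E (mx N1 i1 + N1 * i2)) / h1\<^sup>2))
  + (\<Sum>i1<N1. \<Sum>i2<N2. A (i1 + N1 * i2) *
        ((E (i1 + N1 * px N2 i2) - 2 * E (i1 + N1 * i2) + E (i1 + N1 * mx N2 i2)) / h2\<^sup>2))"
proof -
  have "(\<Sum>m<N1 * N2. A m * lap_h h1 h2 N1 N2 E m) =
    (\<Sum>i2<N2. \<Sum>i1<N1. A (i1 + N1 * i2) *
        ((E (px N1 i1 + N1 * i2) - 2 * E (i1 + N1 * i2) + E (mx N1 i1 + N1 * i2)) / h1\<^sup>2)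
      + A (i1 + N1 * i2) *
        ((E (i1 + N1 * px N2 i2) - 2 * E (i1 + N1 * i2) + E (i1 + N1 * mx N2 i2)) / h2\<^sup>2))"
    unfolding sum_split by (intro sum.cong refl) (simp add: lap_at distrib_left)
  also have "\<dots> = (\<Sum>i2<N2. \<Sum>i1<N1. A (i1 + N1 * i2) *
        ((E (px N1 i1 + N1 * i2) - 2 * E (i1 + N1 * i2) + E (mx N1 i1 + N1 * i2)) / h1\<^sup>2))
    + (\<Sum>i2<N2. \<Sum>i1<N1. A (i1 + N1 * i2) *
        ((E (i1 + N1 * px N2 i2) - 2 * E (i1 + N1 * i2) + E (i1 + N1 * mx N2 i2)) / h2\<^sup>2))"
    by (simp only: sum.distrib)
  also have "(\<Sum>i2<N2. \<Sum>i1<N1. A (i1 + N1 * i2) *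
        ((E (i1 + N1 * px N2 i2) - 2 * E (i1 + N1 * i2) + E (i1 + N1 * mx N2 i2)) / h2\<^sup>2))
     = (\<Sum>i1<N1. \<Sum>i2<N2. A (i1 + N1 * i2) *
        ((E (i1 + N1 * px N2 i2) - 2 * E (i1 + N1 * i2) + E (i1 + N1 * mx N2 i2)) / h2\<^sup>2))"
    by (rule sum.swap)
  finally show ?thesis .
qed

lemma grad_id:
  assumes N: "N1 > 0" "N2 > 0"
  shows "(\<Sum>m<N1 * N2. E m * lap_h h1 h2 N1 N2 E m) =
    - ((\<Sum>m<N1 * N2. (dxp h1 N1 N2 E m)\<^sup>2) + (\<Sum>m<N1 * N2. (dyp h2 N1 N2 E m)\<^sup>2))"
proof -
  have x: "(\<Sum>i2<N2. \<Sum>i1<N1. E (i1 + N1 * i2) *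
        ((E (px N1 i1 + N1 * i2) - 2 * E (i1 + N1 * i2) + E (mx N1 i1 + N1 * i2)) / h1\<^sup>2))
      = - (\<Sum>m<N1 * N2. (dxp h1 N1 N2 E m)\<^sup>2)"
  proof -
    have "(\<Sum>i2<N2. \<Sum>i1<N1. E (i1 + N1 * i2) *
        ((E (px N1 i1 + N1 * i2) - 2 * E (i1 + N1 * i2) + E (mx N1 i1 + N1 * i2)) / h1\<^sup>2))
      = (\<Sum>i2<N2. - (\<Sum>i1<N1. ((E (px N1 i1 + N1 * i2) - E (i1 + N1 * i2)) / h1) *
            ((E (px N1 i1 + N1 * i2) - E (i1 + N1 * i2)) / h1)))"
    proof (rule sum.cong[OF refl])
      fix i2 show "(\<Sum>i1<N1. E (i1 + N1 * i2) *
        ((E (px N1 i1 + N1 * i2) - 2 * E (i1 + N1 * i2) + E (mx N1 i1 + N1 * i2)) / h1\<^sup>2))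
      = - (\<Sum>i1<N1. ((E (px N1 i1 + N1 * i2) - E (i1 + N1 * i2)) / h1) *
            ((E (px N1 i1 + N1 * i2) - E (i1 + N1 * i2)) / h1))"
        using sbp1d[OF N(1), of "\<lambda>i. E (i + N1 * i2)" "\<lambda>i. E (i + N1 * i2)" h1] by simp
    qed
    also have "\<dots> = - (\<Sum>m<N1 * N2. (dxp h1 N1 N2 E m)\<^sup>2)"
      unfolding sum_split sum_negf[symmetric] by (intro sum.cong refl) (simp add: dxp_at power2_eq_square)
    finally show ?thesis .
  qed
  have y: "(\<Sum>i1<N1. \<Sum>i2<N2. E (i1 + N1 * i2) *
        ((E (i1 + N1 * px N2 i2) - 2 * E (i1 + N1 * i2) + E (i1 + N1 * mx N2 i2)) / h2\<^sup>2))
      = - (\<Sum>m<N1 * N2. (dyp h2 N1 N2 E m)\<^sup>2)"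
  proof -
    have "(\<Sum>i1<N1. \<Sum>i2<N2. E (i1 + N1 * i2) *
        ((E (i1 + N1 * px N2 i2) - 2 * E (i1 + N1 * i2) + E (i1 + N1 * mx N2 i2)) / h2\<^sup>2))
      = (\<Sum>i1<N1. - (\<Sum>i2<N2. ((E (i1 + N1 * px N2 i2) - E (i1 + N1 * i2)) / h2) *
            ((E (i1 + N1 * px N2 i2) - E (i1 + N1 * i2)) / h2)))"
    proof (rule sum.cong[OF refl])
      fix i1 show "(\<Sum>i2<N2. E (i1 + N1 * i2) *
        ((E (i1 + N1 * px N2 i2) - 2 * E (i1 + N1 * i2) + E (i1 + N1 * mx N2 i2)) / h2\<^sup>2))
      = - (\<Sum>i2<N2. ((E (i1 + N1 * px N2 i2) - E (i1 + N1 * i2)) / h2) *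
            ((E (i1 + N1 * px N2 i2) - E (i1 + N1 * i2)) / h2))"
        using sbp1d[OF N(2), of "\<lambda>i. E (i1 + N1 * i)" "\<lambda>i. E (i1 + N1 * i)" h2] by simp
    qed
    also have "\<dots> = - (\<Sum>i2<N2. \<Sum>i1<N1. (dyp h2 N1 N2 E (i1 + N1 * i2))\<^sup>2)"
      unfolding sum_negf[symmetric] by (subst sum.swap) (intro sum.cong refl, simp add: dyp_at power2_eq_square)
    also have "\<dots> = - (\<Sum>m<N1 * N2. (dyp h2 N1 N2 E m)\<^sup>2)" unfolding sum_split ..
    finally show ?thesis .
  qed
  show ?thesis unfolding lap_split[OF N] x y by simp
qed


lemma mixed_bound:
  assumes N: "N1 > 0" "N2 > 0" and h: "h1 \<noteq> 0" "h2 \<noteq> 0"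
  shows "2 * (\<Sum>m<N1 * N2. (dyp h2 N1 N2 (dxp h1 N1 N2 E) m)\<^sup>2) \<le> (\<Sum>m<N1 * N2. (lap_h h1 h2 N1 N2 E m)\<^sup>2)"
proof -
  define W where "W i1 i2 = (E (px N1 i1 + N1 * i2) - E (i1 + N1 * i2)) / h1" for i1 i2
  define Lx where "Lx i1 i2 = (E (px N1 i1 + N1 * i2) - 2 * E (i1 + N1 * i2) + E (mx N1 i1 + N1 * i2)) / h1\<^sup>2" for i1 i2
  define Ly where "Ly i1 i2 = (E (i1 + N1 * px N2 i2) - 2 * E (i1 + N1 * i2) + E (i1 + N1 * mx N2 i2)) / h2\<^sup>2" for i1 i2
  have mixed: "dyp h2 N1 N2 (dxp h1 N1 N2 E) (i1 + N1 * i2) = (W i1 (px N2 i2) - W i1 i2) / h2"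
    if "i1 < N1" "i2 < N2" for i1 i2
    using that px_lt[OF N(2)] by (simp add: dyp_at dxp_at W_def)
  have dLy: "(Ly (px N1 i1) i2 - Ly i1 i2) / h1 = (W i1 (px N2 i2) - 2 * W i1 i2 + W i1 (mx N2 i2)) / h2\<^sup>2" for i1 i2
    unfolding Ly_def W_def using h by (simp add: field_simps)
  have "(\<Sum>i2<N2. \<Sum>i1<N1. Ly i1 i2 * Lx i1 i2)
      = (\<Sum>i2<N2. - (\<Sum>i1<N1. ((Ly (px N1 i1) i2 - Ly i1 i2) / h1) * W i1 i2))"
  proof (rule sum.cong[OF refl])
    fix i2 show "(\<Sum>i1<N1. Ly i1 i2 * Lx i1 i2) = - (\<Sum>i1<N1. ((Ly (px N1 i1) i2 - Ly i1 i2) / h1) * W i1 i2)"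
      using sbp1d[OF N(1), of "\<lambda>i. Ly i i2" "\<lambda>i. E (i + N1 * i2)" h1] unfolding Lx_def W_def by simp
  qed
  also have "\<dots> = (\<Sum>i1<N1. - (\<Sum>i2<N2. W i1 i2 * ((W i1 (px N2 i2) - 2 * W i1 i2 + W i1 (mx N2 i2)) / h2\<^sup>2)))"
    unfolding dLy sum_negf[symmetric] by (subst sum.swap) (simp add: mult.commute)
  also have "\<dots> = (\<Sum>i1<N1. \<Sum>i2<N2. ((W i1 (px N2 i2) - W i1 i2) / h2) * ((W i1 (px N2 i2) - W i1 i2) / h2))"
  proof (rule sum.cong[OF refl])
    fix i1 show "- (\<Sum>i2<N2. W i1 i2 * ((W i1 (px N2 i2) - 2 * W i1 i2 + W i1 (mx N2 i2)) / h2\<^sup>2)) =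
       (\<Sum>i2<N2. ((W i1 (px N2 i2) - W i1 i2) / h2) * ((W i1 (px N2 i2) - W i1 i2) / h2))"
      using sbp1d[OF N(2), of "\<lambda>i. W i1 i" "\<lambda>i. W i1 i" h2] by simp
  qed
  also have "\<dots> = (\<Sum>i2<N2. \<Sum>i1<N1. (dyp h2 N1 N2 (dxp h1 N1 N2 E) (i1 + N1 * i2))\<^sup>2)"
    by (subst sum.swap) (intro sum.cong refl, simp add: mixed power2_eq_square)
  also have "\<dots> = (\<Sum>m<N1 * N2. (dyp h2 N1 N2 (dxp h1 N1 N2 E) m)\<^sup>2)" unfolding sum_split ..
  finally have key: "(\<Sum>i2<N2. \<Sum>i1<N1. Ly i1 i2 * Lx i1 i2) = (\<Sum>m<N1 * N2. (dyp h2 N1 N2 (dxp h1 N1 N2 E) m)\<^sup>2)" .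
  have "(\<Sum>m<N1 * N2. (lap_h h1 h2 N1 N2 E m)\<^sup>2) = (\<Sum>i2<N2. \<Sum>i1<N1. (Lx i1 i2 + Ly i1 i2)\<^sup>2)"
    unfolding sum_split by (intro sum.cong refl) (simp add: lap_at Lx_def Ly_def)
  also have "\<dots> \<ge> (\<Sum>i2<N2. \<Sum>i1<N1. 2 * (Ly i1 i2 * Lx i1 i2))"
  proof (intro sum_mono)
    fix i1 i2
    have "0 \<le> (Lx i1 i2)\<^sup>2 + (Ly i1 i2)\<^sup>2" by simp
    moreover have "(Lx i1 i2 + Ly i1 i2)\<^sup>2 = (Lx i1 i2)\<^sup>2 + (Ly i1 i2)\<^sup>2 + 2 * (Ly i1 i2 * Lx i1 i2)"
      by (simp add: power2_eq_square algebra_simps)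
    ultimately show "2 * (Ly i1 i2 * Lx i1 i2) \<le> (Lx i1 i2 + Ly i1 i2)\<^sup>2" by linarith
  qed
  finally show ?thesis unfolding sum_distrib_left[symmetric] key .
qed


lemma cs_abs: "(\<Sum>x\<in>A. \<bar>f x\<bar>)\<^sup>2 \<le> real (card A) * (\<Sum>x\<in>A. (f x)\<^sup>2)"
proof -
  have "(\<Sum>x\<in>A. \<bar>f x\<bar> * \<bar>1\<bar>) \<le> L2_set f A * L2_set (\<lambda>_. 1) A" by (rule L2_set_mult_ineq)
  then have a: "(\<Sum>x\<in>A. \<bar>f x\<bar>) \<le> L2_set f A * sqrt (real (card A))" by (simp add: L2_set_constant)
  have "0 \<le> (\<Sum>x\<in>A. \<bar>f x\<bar>)" by (simp add: sum_nonneg)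
  then have "(\<Sum>x\<in>A. \<bar>f x\<bar>)\<^sup>2 \<le> (L2_set f A * sqrt (real (card A)))\<^sup>2"
    using a by (intro power_mono) auto
  also have "\<dots> = (L2_set f A)\<^sup>2 * real (card A)" by (simp add: power_mult_distrib)
  also have "(L2_set f A)\<^sup>2 = (\<Sum>x\<in>A. (f x)\<^sup>2)"
    by (cases "finite A") (simp_all add: L2_set_def sum_nonneg)
  finally show ?thesis by (simp add: mult.commute)
qed

lemma four_sq: "(a + b + c + d)\<^sup>2 \<le> 4 * (a\<^sup>2 + b\<^sup>2 + c\<^sup>2 + (d::real)\<^sup>2)"
proof -
  have "4 * (a\<^sup>2 + b\<^sup>2 + c\<^sup>2 + d\<^sup>2) - (a + b + c + d)\<^sup>2 =
    (a - b)\<^sup>2 + (a - c)\<^sup>2 + (a - d)\<^sup>2 + (b - c)\<^sup>2 + (b - d)\<^sup>2 + (c - d)\<^sup>2"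
    by (simp add: power2_eq_square algebra_simps)
  moreover have "0 \<le> (a - b)\<^sup>2 + (a - c)\<^sup>2 + (a - d)\<^sup>2 + (b - c)\<^sup>2 + (b - d)\<^sup>2 + (c - d)\<^sup>2" by simp
  ultimately show ?thesis by linarith
qed

lemma abs_sum_diff: fixes a b :: "'i \<Rightarrow> real" shows "\<bar>(\<Sum>k\<in>A. \<bar>a k\<bar>) - (\<Sum>k\<in>A. \<bar>b k\<bar>)\<bar> \<le> (\<Sum>k\<in>A. \<bar>a k - b k\<bar>)"
proof -
  have "\<bar>(\<Sum>k\<in>A. \<bar>a k\<bar>) - (\<Sum>k\<in>A. \<bar>b k\<bar>)\<bar> = \<bar>\<Sum>k\<in>A. \<bar>a k\<bar> - \<bar>b k\<bar>\<bar>" by (simp only: sum_subtractf)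
  also have "\<dots> \<le> (\<Sum>k\<in>A. \<bar>\<bar>a k\<bar> - \<bar>b k\<bar>\<bar>)" by (rule sum_abs)
  also have "\<dots> \<le> (\<Sum>k\<in>A. \<bar>a k - b k\<bar>)" by (intro sum_mono) (rule abs_triangle_ineq3)
  finally show ?thesis .
qed

lemma sup2d_raw:
  fixes E :: "nat \<Rightarrow> real"
  assumes N: "N1 > 0" "N2 > 0" and j: "j1 < N1" "j2 < N2"
  shows "\<bar>E (j1 + N1 * j2)\<bar> \<le>
      (\<Sum>i2<N2. \<Sum>i1<N1. \<bar>E (i1 + N1 * i2)\<bar>) / (real N1 * real N2)
    + (\<Sum>i2<N2. \<Sum>i1<N1. \<bar>E (i1 + N1 * px N2 i2) - E (i1 + N1 * i2)\<bar>) / real N1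
    + (\<Sum>i2<N2. \<Sum>i1<N1. \<bar>E (px N1 i1 + N1 * i2) - E (i1 + N1 * i2)\<bar>) / real N2
    + (\<Sum>i2<N2. \<Sum>i1<N1. \<bar>(E (px N1 i1 + N1 * px N2 i2) - E (i1 + N1 * px N2 i2))
                          - (E (px N1 i1 + N1 * i2) - E (i1 + N1 * i2))\<bar>)"
proof -
  define R where "R b = (\<Sum>k<N1. \<bar>E (k + N1 * b)\<bar>)" for b
  define T where "T b = (\<Sum>k<N1. \<bar>E (px N1 k + N1 * b) - E (k + N1 * b)\<bar>)" for b
  have s1: "\<bar>E (j1 + N1 * j2)\<bar> \<le> R j2 / real N1 + T j2"
    using sup1d[OF N(1) j(1), of "\<lambda>i. E (i + N1 * j2)"] unfolding R_def T_def by simp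
  have Rnn: "0 \<le> R b" for b unfolding R_def by (simp add: sum_nonneg)
  have Tnn: "0 \<le> T b" for b unfolding T_def by (simp add: sum_nonneg)
  have s2: "R j2 \<le> (\<Sum>b<N2. R b) / real N2 + (\<Sum>b<N2. \<bar>R (px N2 b) - R b\<bar>)"
    using sup1d[OF N(2) j(2), of R] by (simp add: abs_of_nonneg Rnn)
  have s3: "T j2 \<le> (\<Sum>b<N2. T b) / real N2 + (\<Sum>b<N2. \<bar>T (px N2 b) - T b\<bar>)"
    using sup1d[OF N(2) j(2), of T] by (simp add: abs_of_nonneg Tnn)
  have r: "(\<Sum>b<N2. \<bar>R (px N2 b) - R b\<bar>) \<le> (\<Sum>i2<N2. \<Sum>i1<N1. \<bar>E (i1 + N1 * px N2 i2) - E (i1 + N1 * i2)\<bar>)"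
    unfolding R_def by (intro sum_mono abs_sum_diff)
  have t: "(\<Sum>b<N2. \<bar>T (px N2 b) - T b\<bar>) \<le> (\<Sum>i2<N2. \<Sum>i1<N1. \<bar>(E (px N1 i1 + N1 * px N2 i2) - E (i1 + N1 * px N2 i2))
                          - (E (px N1 i1 + N1 * i2) - E (i1 + N1 * i2))\<bar>)"
    unfolding T_def by (intro sum_mono abs_sum_diff)
  have "R j2 / real N1 \<le> ((\<Sum>b<N2. R b) / real N2 + (\<Sum>i2<N2. \<Sum>i1<N1. \<bar>E (i1 + N1 * px N2 i2) - E (i1 + N1 * i2)\<bar>)) / real N1"
    using s2 r N by (intro divide_right_mono) auto
  also have "\<dots> = (\<Sum>i2<N2. \<Sum>i1<N1. \<bar>E (i1 + N1 * i2)\<bar>) / (real N1 * real N2)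
    + (\<Sum>i2<N2. \<Sum>i1<N1. \<bar>E (i1 + N1 * px N2 i2) - E (i1 + N1 * i2)\<bar>) / real N1"
    unfolding R_def by (simp add: add_divide_distrib mult.commute)
  finally have A: "R j2 / real N1 \<le> \<dots>" .
  have B: "T j2 \<le> (\<Sum>i2<N2. \<Sum>i1<N1. \<bar>E (px N1 i1 + N1 * i2) - E (i1 + N1 * i2)\<bar>) / real N2
    + (\<Sum>i2<N2. \<Sum>i1<N1. \<bar>(E (px N1 i1 + N1 * px N2 i2) - E (i1 + N1 * px N2 i2))
                          - (E (px N1 i1 + N1 * i2) - E (i1 + N1 * i2))\<bar>)"
    using s3 t unfolding T_def by linarith
  show ?thesis using s1 A B by linarith
qed


lemma cs_vec: "(\<Sum>m<n. \<bar>c * V m\<bar>)\<^sup>2 \<le> real n * c\<^sup>2 * (\<Sum>m<n. (V m)\<^sup>2)"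
  using cs_abs[of "\<lambda>m. c * V m" "{..<n}"] by (simp add: power_mult_distrib sum_distrib_left mult.assoc)

lemma sq_div_bound:
  fixes S q :: real
  assumes "S\<^sup>2 \<le> B" "q > 0"
  shows "(S / q)\<^sup>2 \<le> B / q\<^sup>2"
  using assms by (simp add: power_divide divide_right_mono)

lemma mixed_raw:
  assumes N: "N2 > 0" and h: "h1 \<noteq> 0" "h2 \<noteq> 0" and i: "i1 < N1" "i2 < N2"
  shows "(h1 * h2) * dyp h2 N1 N2 (dxp h1 N1 N2 E) (i1 + N1 * i2) =
     (E (px N1 i1 + N1 * px N2 i2) - E (i1 + N1 * px N2 i2)) - (E (px N1 i1 + N1 * i2) - E (i1 + N1 * i2))"
proof -
  have "dyp h2 N1 N2 (dxp h1 N1 N2 E) (i1 + N1 * i2) =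
     ((E (px N1 i1 + N1 * px N2 i2) - E (i1 + N1 * px N2 i2)) / h1 - (E (px N1 i1 + N1 * i2) - E (i1 + N1 * i2)) / h1) / h2"
    using i px_lt[OF N] by (simp add: dyp_at dxp_at)
  moreover have "h1 * h2 * ((a / h1 - b / h1) / h2) = a - b" for a b
    using h by (simp add: field_simps)
  ultimately show ?thesis by simp
qed

lemma sup2d:
  fixes E :: "nat \<Rightarrow> real"
  assumes N: "N1 > 0" "N2 > 0" and h: "h1 \<noteq> 0" "h2 \<noteq> 0" and m: "m < N1 * N2"
  shows "(E m)\<^sup>2 \<le> 4 * ((\<Sum>k<N1 * N2. (E k)\<^sup>2) / (real N1 * real N2)
      + real N2 / real N1 * h2\<^sup>2 * (\<Sum>k<N1 * N2. (dyp h2 N1 N2 E k)\<^sup>2)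
      + real N1 / real N2 * h1\<^sup>2 * (\<Sum>k<N1 * N2. (dxp h1 N1 N2 E k)\<^sup>2)
      + real N1 * real N2 * (h1 * h2)\<^sup>2 * (\<Sum>k<N1 * N2. (dyp h2 N1 N2 (dxp h1 N1 N2 E) k)\<^sup>2))"
proof -
  let ?n = "N1 * N2"
  define j1 where "j1 = m mod N1"
  define j2 where "j2 = m div N1"
  have j: "j1 < N1" "j2 < N2" "m = j1 + N1 * j2"
    using m N unfolding j1_def j2_def by (auto simp: less_mult_imp_div_less mult.commute)
  define a where "a = (\<Sum>k<?n. \<bar>1 * E k\<bar>) / (real N1 * real N2)"
  define b where "b = (\<Sum>k<?n. \<bar>h2 * dyp h2 N1 N2 E k\<bar>) / real N1"
  define c where "c = (\<Sum>k<?n. \<bar>h1 * dxp h1 N1 N2 E k\<bar>) / real N2"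
  define d where "d = (\<Sum>k<?n. \<bar>(h1 * h2) * dyp h2 N1 N2 (dxp h1 N1 N2 E) k\<bar>)"
  have raw: "\<bar>E m\<bar> \<le> a + b + c + d"
  proof -
    have ea: "(\<Sum>i2<N2. \<Sum>i1<N1. \<bar>E (i1 + N1 * i2)\<bar>) = (\<Sum>k<?n. \<bar>1 * E k\<bar>)"
      unfolding sum_split by simp
    have eb: "(\<Sum>i2<N2. \<Sum>i1<N1. \<bar>E (i1 + N1 * px N2 i2) - E (i1 + N1 * i2)\<bar>) = (\<Sum>k<?n. \<bar>h2 * dyp h2 N1 N2 E k\<bar>)"
      unfolding sum_split using h by (intro sum.cong refl) (simp add: dyp_at)
    have ec: "(\<Sum>i2<N2. \<Sum>i1<N1. \<bar>E (px N1 i1 + N1 * i2) - E (i1 + N1 * i2)\<bar>) = (\<Sum>k<?n. \<bar>h1 * dxp h1 N1 N2 E k\<bar>)"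
      unfolding sum_split using h by (intro sum.cong refl) (simp add: dxp_at)
    have ed: "(\<Sum>i2<N2. \<Sum>i1<N1. \<bar>(E (px N1 i1 + N1 * px N2 i2) - E (i1 + N1 * px N2 i2))
                          - (E (px N1 i1 + N1 * i2) - E (i1 + N1 * i2))\<bar>)
        = (\<Sum>k<?n. \<bar>(h1 * h2) * dyp h2 N1 N2 (dxp h1 N1 N2 E) k\<bar>)"
      unfolding sum_split using h N by (intro sum.cong refl) (simp add: mixed_raw)
    show ?thesis using sup2d_raw[OF N j(1,2), of E] unfolding ea eb ec ed a_def b_def c_def d_def j(3) .
  qed
  have a2: "a\<^sup>2 \<le> (\<Sum>k<?n. (E k)\<^sup>2) / (real N1 * real N2)"
  proof -
    have "a\<^sup>2 \<le> (real ?n * 1\<^sup>2 * (\<Sum>k<?n. (E k)\<^sup>2)) / (real N1 * real N2)\<^sup>2"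
      unfolding a_def using N by (intro sq_div_bound cs_vec) auto
    also have "\<dots> = (\<Sum>k<?n. (E k)\<^sup>2) / (real N1 * real N2)" using N by (simp add: power2_eq_square)
    finally show ?thesis .
  qed
  have b2: "b\<^sup>2 \<le> real N2 / real N1 * h2\<^sup>2 * (\<Sum>k<?n. (dyp h2 N1 N2 E k)\<^sup>2)"
  proof -
    have "b\<^sup>2 \<le> (real ?n * h2\<^sup>2 * (\<Sum>k<?n. (dyp h2 N1 N2 E k)\<^sup>2)) / (real N1)\<^sup>2"
      unfolding b_def using N by (intro sq_div_bound cs_vec) auto
    also have "\<dots> = real N2 / real N1 * h2\<^sup>2 * (\<Sum>k<?n. (dyp h2 N1 N2 E k)\<^sup>2)" using N by (simp add: power2_eq_square)
    finally show ?thesis .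
  qed
  have c2: "c\<^sup>2 \<le> real N1 / real N2 * h1\<^sup>2 * (\<Sum>k<?n. (dxp h1 N1 N2 E k)\<^sup>2)"
  proof -
    have "c\<^sup>2 \<le> (real ?n * h1\<^sup>2 * (\<Sum>k<?n. (dxp h1 N1 N2 E k)\<^sup>2)) / (real N2)\<^sup>2"
      unfolding c_def using N by (intro sq_div_bound cs_vec) auto
    also have "\<dots> = real N1 / real N2 * h1\<^sup>2 * (\<Sum>k<?n. (dxp h1 N1 N2 E k)\<^sup>2)" using N by (simp add: power2_eq_square)
    finally show ?thesis .
  qed
  have d2: "d\<^sup>2 \<le> real N1 * real N2 * (h1 * h2)\<^sup>2 * (\<Sum>k<?n. (dyp h2 N1 N2 (dxp h1 N1 N2 E) k)\<^sup>2)"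
    unfolding d_def using cs_vec[where n="?n" and c="h1 * h2"] by simp
  have "(E m)\<^sup>2 = \<bar>E m\<bar>\<^sup>2" by simp
  also have "\<dots> \<le> (a + b + c + d)\<^sup>2" using raw by (intro power_mono) auto
  also have "\<dots> \<le> 4 * (a\<^sup>2 + b\<^sup>2 + c\<^sup>2 + d\<^sup>2)" by (rule four_sq)
  also have "\<dots> \<le> 4 * ((\<Sum>k<N1 * N2. (E k)\<^sup>2) / (real N1 * real N2)
      + real N2 / real N1 * h2\<^sup>2 * (\<Sum>k<N1 * N2. (dyp h2 N1 N2 E k)\<^sup>2)
      + real N1 / real N2 * h1\<^sup>2 * (\<Sum>k<N1 * N2. (dxp h1 N1 N2 E k)\<^sup>2)
      + real N1 * real N2 * (h1 * h2)\<^sup>2 * (\<Sum>k<N1 * N2. (dyp h2 N1 N2 (dxp h1 N1 N2 E) k)\<^sup>2))"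
    using a2 b2 c2 d2 by (intro mult_left_mono add_mono) auto
  finally show ?thesis .
qed


lemma nh_sq: assumes "0 \<le> h1 * h2"
  shows "(norm_h h1 h2 N1 N2 X)\<^sup>2 = h1 * h2 * (\<Sum>m<N1 * N2. (X m)\<^sup>2)"
proof -
  have "0 \<le> h1 * h2 * (\<Sum>m<N1 * N2. (X m)\<^sup>2)" using assms by (simp add: sum_nonneg)
  then show ?thesis unfolding norm_h_def inner_h_def by (simp add: power2_eq_square)
qed

lemma nh_nonneg: "0 \<le> h1 * h2 \<Longrightarrow> 0 \<le> norm_h h1 h2 N1 N2 X"
  unfolding norm_h_def inner_h_def by (simp add: sum_nonneg)

lemma grad_eq: assumes "0 \<le> h1 * h2"
  shows "grad_norm_sq h1 h2 N1 N2 E = h1 * h2 * ((\<Sum>m<N1 * N2. (dxp h1 N1 N2 E m)\<^sup>2) + (\<Sum>m<N1 * N2. (dyp h2 N1 N2 E m)\<^sup>2))"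
  unfolding grad_norm_sq_def nh_sq[OF assms] by (simp add: distrib_left)

lemma grad_bound:
  assumes N: "N1 > 0" "N2 > 0" and h: "0 < h1" "0 < h2"
  shows "grad_norm_sq h1 h2 N1 N2 E \<le> norm_h h1 h2 N1 N2 E * norm_h h1 h2 N1 N2 (lap_h h1 h2 N1 N2 E)"
proof -
  let ?n = "N1 * N2"
  have hh: "0 \<le> h1 * h2" using h by simp
  have "grad_norm_sq h1 h2 N1 N2 E = h1 * h2 * (- (\<Sum>m<?n. E m * lap_h h1 h2 N1 N2 E m))"
    unfolding grad_eq[OF hh] grad_id[OF N] by simp
  also have "\<dots> \<le> h1 * h2 * (\<Sum>m<?n. \<bar>E m\<bar> * \<bar>lap_h h1 h2 N1 N2 E m\<bar>)"
  proof -
    have "- (\<Sum>m<?n. E m * lap_h h1 h2 N1 N2 E m) \<le> (\<Sum>m<?n. \<bar>E m\<bar> * \<bar>lap_h h1 h2 N1 N2 E m\<bar>)"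
      unfolding sum_negf[symmetric] by (intro sum_mono) (simp add: abs_mult[symmetric])
    then show ?thesis by (rule mult_left_mono[OF _ hh])
  qed
  also have "\<dots> \<le> h1 * h2 * (L2_set E {..<?n} * L2_set (lap_h h1 h2 N1 N2 E) {..<?n})"
    using hh by (intro mult_left_mono L2_set_mult_ineq)
  also have "\<dots> = norm_h h1 h2 N1 N2 E * norm_h h1 h2 N1 N2 (lap_h h1 h2 N1 N2 E)"
  proof -
    have q: "sqrt (h1 * h2 * A) * sqrt (h1 * h2 * B) = h1 * h2 * (sqrt A * sqrt B)" for A B
    proof -
      have "sqrt (h1 * h2 * A) * sqrt (h1 * h2 * B) = (sqrt (h1 * h2) * sqrt (h1 * h2)) * (sqrt A * sqrt B)"
        by (simp add: real_sqrt_mult)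
      also have "sqrt (h1 * h2) * sqrt (h1 * h2) = h1 * h2" using hh by simp
      finally show ?thesis .
    qed
    show ?thesis unfolding norm_h_def inner_h_def L2_set_def q by (simp add: power2_eq_square)
  qed
  finally show ?thesis .
qed


definition Ks :: "real \<Rightarrow> real \<Rightarrow> real" where
  "Ks l1 l2 = 4 * (1 / (l1 * l2) + l2 / l1 + l1 / l2 + l1 * l2)"

lemma sup_norm:
  assumes N: "N1 > 0" "N2 > 0" and l: "l1 > 0" "l2 > 0" and m: "m < N1 * N2"
  shows "(E m)\<^sup>2 \<le> Ks l1 l2 * (norm_h (l1 / real N1) (l2 / real N2) N1 N2 E
      + norm_h (l1 / real N1) (l2 / real N2) N1 N2 (lap_h (l1 / real N1) (l2 / real N2) N1 N2 E))\<^sup>2"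
proof -
  let ?n = "N1 * N2"
  define h1 where "h1 = l1 / real N1"
  define h2 where "h2 = l2 / real N2"
  have h: "h1 > 0" "h2 > 0" using N l unfolding h1_def h2_def by auto
  have hh: "0 \<le> h1 * h2" using h by simp
  define e where "e = norm_h h1 h2 N1 N2 E"
  define g where "g = norm_h h1 h2 N1 N2 (lap_h h1 h2 N1 N2 E)"
  define S0 where "S0 = (\<Sum>k<?n. (E k)\<^sup>2)"
  define Sx where "Sx = (\<Sum>k<?n. (dxp h1 N1 N2 E k)\<^sup>2)"
  define Sy where "Sy = (\<Sum>k<?n. (dyp h2 N1 N2 E k)\<^sup>2)"
  define Sxy where "Sxy = (\<Sum>k<?n. (dyp h2 N1 N2 (dxp h1 N1 N2 E) k)\<^sup>2)"
  define Sl where "Sl = (\<Sum>k<?n. (lap_h h1 h2 N1 N2 E k)\<^sup>2)"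
  have e0: "0 \<le> e" "0 \<le> g" unfolding e_def g_def using nh_nonneg[OF hh] by auto
  have e2: "e\<^sup>2 = h1 * h2 * S0" unfolding e_def S0_def by (rule nh_sq[OF hh])
  have g2: "g\<^sup>2 = h1 * h2 * Sl" unfolding g_def Sl_def by (rule nh_sq[OF hh])
  have sup: "(E m)\<^sup>2 \<le> 4 * (S0 / (real N1 * real N2) + real N2 / real N1 * h2\<^sup>2 * Sy
      + real N1 / real N2 * h1\<^sup>2 * Sx + real N1 * real N2 * (h1 * h2)\<^sup>2 * Sxy)"
    unfolding S0_def Sx_def Sy_def Sxy_def using sup2d[OF N _ _ m, of h1 h2 E] h by simp
  have gr: "h1 * h2 * Sx + h1 * h2 * Sy \<le> e * g"
    using grad_bound[OF N h, of E] unfolding grad_eq[OF hh] e_def g_def Sx_def Sy_def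
    by (simp add: distrib_left)
  have Sx0: "0 \<le> h1 * h2 * Sx" "0 \<le> h1 * h2 * Sy" "0 \<le> h1 * h2 * Sxy"
    unfolding Sx_def Sy_def Sxy_def using hh by (simp_all add: sum_nonneg)
  have mx: "h1 * h2 * Sxy \<le> g\<^sup>2 / 2"
  proof -
    have "2 * Sxy \<le> Sl" unfolding Sxy_def Sl_def using mixed_bound[OF N, of h1 h2 E] h by simp
    then have "h1 * h2 * (2 * Sxy) \<le> h1 * h2 * Sl" using hh by (rule mult_left_mono)
    then show ?thesis unfolding g2 by simp
  qed
  have F1: "S0 / (real N1 * real N2) = e\<^sup>2 / (l1 * l2)"
    unfolding e2 h1_def h2_def using N l by (simp add: field_simps)
  have F2: "real N2 / real N1 * h2\<^sup>2 * Sy = l2 / l1 * (h1 * h2 * Sy)"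
    unfolding h1_def h2_def using N l by (simp add: field_simps power2_eq_square)
  have F3: "real N1 / real N2 * h1\<^sup>2 * Sx = l1 / l2 * (h1 * h2 * Sx)"
    unfolding h1_def h2_def using N l by (simp add: field_simps power2_eq_square)
  have F4: "real N1 * real N2 * (h1 * h2)\<^sup>2 * Sxy = l1 * l2 * (h1 * h2 * Sxy)"
    unfolding h1_def h2_def using N l by (simp add: field_simps power2_eq_square)
  have p1: "e\<^sup>2 \<le> (e + g)\<^sup>2" "e * g \<le> (e + g)\<^sup>2" "g\<^sup>2 / 2 \<le> (e + g)\<^sup>2"
    using e0 by (auto simp: power2_eq_square algebra_simps)
  have "(E m)\<^sup>2 \<le> 4 * (e\<^sup>2 / (l1 * l2) + l2 / l1 * (h1 * h2 * Sy) + l1 / l2 * (h1 * h2 * Sx) + l1 * l2 * (h1 * h2 * Sxy))"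
    using sup unfolding F1 F2 F3 F4 .
  also have "\<dots> \<le> 4 * ((e + g)\<^sup>2 / (l1 * l2) + l2 / l1 * (e + g)\<^sup>2 + l1 / l2 * (e + g)\<^sup>2 + l1 * l2 * (e + g)\<^sup>2)"
  proof -
    have a: "e\<^sup>2 / (l1 * l2) \<le> (e + g)\<^sup>2 / (l1 * l2)" using p1 l by (intro divide_right_mono) auto
    have b: "l2 / l1 * (h1 * h2 * Sy) \<le> l2 / l1 * (e + g)\<^sup>2"
      using gr Sx0 p1 l by (intro mult_left_mono) auto
    have c: "l1 / l2 * (h1 * h2 * Sx) \<le> l1 / l2 * (e + g)\<^sup>2"
      using gr Sx0 p1 l by (intro mult_left_mono) auto
    have d: "l1 * l2 * (h1 * h2 * Sxy) \<le> l1 * l2 * (e + g)\<^sup>2"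
      using mx p1 l by (intro mult_left_mono) auto
    show ?thesis using a b c d by simp
  qed
  also have "\<dots> = Ks l1 l2 * (e + g)\<^sup>2" unfolding Ks_def by (simp add: algebra_simps add_divide_distrib)
  finally show ?thesis unfolding e_def g_def h1_def h2_def .
qed


definition skew :: "(nat \<Rightarrow> nat \<Rightarrow> real) \<Rightarrow> bool" where
  "skew M \<longleftrightarrow> (\<forall>i k. M k i = - M i k)"

lemma idm_sym: "idm k i = idm i k" unfolding idm_def by auto

lemma Dsw3: "Dspec 3 N xL len k j = - Dspec 3 N xL len j k"
  using Dspec_swap[of 3 N xL len k j] by simp
lemma Dsw2: "Dspec 2 N xL len k j = Dspec 2 N xL len j k"
  using Dspec_swap[of 2 N xL len k j] by simp
lemma Dsw1: "Dspec 1 N xL len k j = - Dspec 1 N xL len j k"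
  using Dspec_swap[of 1 N xL len k j] by simp

lemma Bmat_skew: "skew (Bmat xL xR yL yR N1 N2)"
  unfolding skew_def Bmat_def kron_def
proof (intro allI)
  fix i k
  show "idm (k div N1) (i div N1) * Dspec 3 N1 xL (xR - xL) (k mod N1) (i mod N1) +
       Dspec 2 N2 yL (yR - yL) (k div N1) (i div N1) * Dspec 1 N1 xL (xR - xL) (k mod N1) (i mod N1) =
       - (idm (i div N1) (k div N1) * Dspec 3 N1 xL (xR - xL) (i mod N1) (k mod N1) +
          Dspec 2 N2 yL (yR - yL) (i div N1) (k div N1) * Dspec 1 N1 xL (xR - xL) (i mod N1) (k mod N1))"
    unfolding Dsw3[of N1 xL "xR - xL" "k mod N1"] Dsw2[of N2 yL "yR - yL" "k div N1"]
      Dsw1[of N1 xL "xR - xL" "k mod N1"] idm_sym[of "k div N1"] by simp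
qed

lemma Lmat_skew: "skew (Lmat xL xR yL yR N1 N2)"
  unfolding skew_def Lmat_def kron_def
proof (intro allI)
  fix i k
  show "idm (k div N1) (i div N1) * Dspec 1 N1 xL (xR - xL) (k mod N1) (i mod N1) +
       Dspec 1 N2 yL (yR - yL) (k div N1) (i div N1) * idm (k mod N1) (i mod N1) =
       - (idm (i div N1) (k div N1) * Dspec 1 N1 xL (xR - xL) (i mod N1) (k mod N1) +
          Dspec 1 N2 yL (yR - yL) (i div N1) (k div N1) * idm (i mod N1) (k mod N1))"
    unfolding Dsw1[of N1 xL "xR - xL" "k mod N1"] Dsw1[of N2 yL "yR - yL" "k div N1"]
      idm_sym[of "k div N1"] idm_sym[of "k mod N1"] by simp
qed

lemma skew_quad: assumes "skew M"
  shows "(\<Sum>i<n. u i * mat_vec n M u i) = 0"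
proof -
  let ?S = "(\<Sum>i<n. \<Sum>k<n. M i k * u i * u k)"
  have "(\<Sum>i<n. u i * mat_vec n M u i) = ?S"
    unfolding mat_vec_def by (simp add: sum_distrib_left algebra_simps)
  also have "?S = (\<Sum>k<n. \<Sum>i<n. M i k * u i * u k)" by (rule sum.swap)
  also have "\<dots> = (\<Sum>k<n. \<Sum>i<n. - (M k i * u k * u i))"
  proof -
    have pw: "M i k * u i * u k = - (M k i * u k * u i)" for i k
    proof -
      have "M i k = - M k i" using assms unfolding skew_def by blast
      then show ?thesis by simp
    qed
    show ?thesis by (rule sum.cong[OF refl], rule sum.cong[OF refl], rule pw)
  qed
  also have "\<dots> = - ?S" by (simp add: sum_negf)
  finally have "?S = - ?S" using \<open>(\<Sum>i<n. u i * mat_vec n M u i) = ?S\<close> by simp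
  then have "?S = 0" by simp
  then show ?thesis using \<open>(\<Sum>i<n. u i * mat_vec n M u i) = ?S\<close> by simp
qed

lemma skew_pair: assumes "skew M"
  shows "(\<Sum>i<n. u i * v i * mat_vec n M u i) + (\<Sum>i<n. u i * mat_vec n M (\<lambda>k. v k * u k) i) = 0"
proof -
  have a: "(\<Sum>i<n. u i * v i * mat_vec n M u i) = (\<Sum>i<n. \<Sum>k<n. M i k * (u i * v i) * u k)"
    unfolding mat_vec_def by (simp add: sum_distrib_left algebra_simps)
  have "(\<Sum>i<n. u i * mat_vec n M (\<lambda>k. v k * u k) i) = (\<Sum>i<n. \<Sum>k<n. M i k * u i * (v k * u k))"
    unfolding mat_vec_def by (simp add: sum_distrib_left algebra_simps)
  also have "\<dots> = (\<Sum>k<n. \<Sum>i<n. M i k * u i * (v k * u k))" by (rule sum.swap)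
  also have "\<dots> = (\<Sum>k<n. \<Sum>i<n. - (M k i * (u k * v k) * u i))"
  proof -
    have pw: "M i k * u i * (v k * u k) = - (M k i * (u k * v k) * u i)" for i k
    proof -
      have "M i k = - M k i" using assms unfolding skew_def by blast
      then show ?thesis by simp
    qed
    show ?thesis by (rule sum.cong[OF refl], rule sum.cong[OF refl], rule pw)
  qed
  also have "\<dots> = - (\<Sum>i<n. \<Sum>k<n. M i k * (u i * v i) * u k)" by (simp add: sum_negf)
  finally show ?thesis using a by simp
qed

lemma skew_move: assumes "skew M"
  shows "(\<Sum>i<n. u i * mat_vec n M w i) = - (\<Sum>i<n. w i * mat_vec n M u i)"
proof -
  have "(\<Sum>i<n. u i * mat_vec n M w i) = (\<Sum>i<n. \<Sum>k<n. M i k * u i * w k)"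
    unfolding mat_vec_def by (simp add: sum_distrib_left algebra_simps)
  also have "\<dots> = (\<Sum>k<n. \<Sum>i<n. M i k * u i * w k)" by (rule sum.swap)
  also have "\<dots> = (\<Sum>k<n. \<Sum>i<n. - (M k i * w k * u i))"
  proof -
    have pw: "M i k * u i * w k = - (M k i * w k * u i)" for i k
    proof -
      have "M i k = - M k i" using assms unfolding skew_def by blast
      then show ?thesis by simp
    qed
    show ?thesis by (rule sum.cong[OF refl], rule sum.cong[OF refl], rule pw)
  qed
  also have "\<dots> = - (\<Sum>i<n. w i * mat_vec n M u i)"
    unfolding mat_vec_def by (simp add: sum_negf sum_distrib_left algebra_simps)
  finally show ?thesis .
qed

lemma mat_vec_diff: "mat_vec n M (\<lambda>k. X k - Y k) i = mat_vec n M X i - mat_vec n M Y i"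
  unfolding mat_vec_def by (simp add: sum_subtractf algebra_simps)

lemma DD_expand:
  "mat_vec n (Dmat p xL xR yL yR N1 N2 W) X i =
     mat_vec n (Bmat xL xR yL yR N1 N2) X i + mat_vec n (Lmat xL xR yL yR N1 N2) X i
   + (W i ^ p * mat_vec n (Lmat xL xR yL yR N1 N2) X i
      + mat_vec n (Lmat xL xR yL yR N1 N2) (\<lambda>k. W k ^ p * X k) i) / (real p + 2)"
proof -
  let ?B = "Bmat xL xR yL yR N1 N2" and ?L = "Lmat xL xR yL yR N1 N2" and ?q = "real p + 2"
  have pw: "Dmat p xL xR yL yR N1 N2 W i k * X k =
     ?B i k * X k + ?L i k * X k + (W i ^ p * (?L i k * X k) + ?L i k * (W k ^ p * X k)) / ?q" for k
    unfolding Dmat_def by (simp add: distrib_right add_divide_distrib mult.assoc mult.left_commute)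
  have "mat_vec n (Dmat p xL xR yL yR N1 N2 W) X i =
     (\<Sum>k<n. ?B i k * X k + ?L i k * X k + (W i ^ p * (?L i k * X k) + ?L i k * (W k ^ p * X k)) / ?q)"
    unfolding mat_vec_def by (simp only: pw)
  also have "\<dots> = (\<Sum>k<n. ?B i k * X k) + (\<Sum>k<n. ?L i k * X k)
       + (W i ^ p * (\<Sum>k<n. ?L i k * X k) + (\<Sum>k<n. ?L i k * (W k ^ p * X k))) / ?q"
    by (simp only: sum.distrib sum_divide_distrib[symmetric] sum_distrib_left)
  finally show ?thesis unfolding mat_vec_def .
qed


lemma mat_vec_add: "mat_vec n M (\<lambda>k. X k + Y k) i = mat_vec n M X i + mat_vec n M Y i"
  unfolding mat_vec_def by (simp add: sum.distrib algebra_simps)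

lemma key_identity:
  fixes X Y WU WV :: "nat \<Rightarrow> real"
  shows "(\<Sum>i<n. (mat_vec n (Dmat p xL xR yL yR N1 N2 WU) X i - mat_vec n (Dmat p xL xR yL yR N1 N2 WV) Y i) * (X i - Y i))
    = ((\<Sum>i<n. (X i - Y i) * (WU i ^ p - WV i ^ p) * mat_vec n (Lmat xL xR yL yR N1 N2) Y i)
      - (\<Sum>i<n. ((WU i ^ p - WV i ^ p) * Y i) * mat_vec n (Lmat xL xR yL yR N1 N2) (\<lambda>k. X k - Y k) i)) / (real p + 2)"
proof -
  let ?B = "Bmat xL xR yL yR N1 N2" and ?L = "Lmat xL xR yL yR N1 N2" and ?q = "real p + 2"
  define E where "E k = X k - Y k" for k
  define a where "a k = WU k ^ p" for k
  define d where "d k = WU k ^ p - WV k ^ p" for k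
  define dY where "dY k = d k * Y k" for k
  have q: "?q \<noteq> 0" by simp
  have LX: "mat_vec n ?L X i = mat_vec n ?L E i + mat_vec n ?L Y i" for i
    unfolding E_def mat_vec_diff by simp
  have BX: "mat_vec n ?B X i - mat_vec n ?B Y i = mat_vec n ?B E i" for i
    unfolding E_def mat_vec_diff by simp
  have LW: "mat_vec n ?L (\<lambda>k. WU k ^ p * X k) i - mat_vec n ?L (\<lambda>k. WV k ^ p * Y k) i
      = mat_vec n ?L (\<lambda>k. a k * E k) i + mat_vec n ?L dY i" for i
  proof -
    have "(\<lambda>k. WU k ^ p * X k) = (\<lambda>k. (a k * E k + dY k) + WV k ^ p * Y k)"
      unfolding a_def E_def dY_def d_def by (simp add: fun_eq_iff algebra_simps)
    then show ?thesis by (simp add: mat_vec_add)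
  qed
  have pw: "(mat_vec n (Dmat p xL xR yL yR N1 N2 WU) X i - mat_vec n (Dmat p xL xR yL yR N1 N2 WV) Y i) * E i
     = E i * mat_vec n ?B E i + E i * mat_vec n ?L E i
       + (E i * a i * mat_vec n ?L E i + E i * mat_vec n ?L (\<lambda>k. a k * E k) i) / ?q
       + (E i * d i * mat_vec n ?L Y i + E i * mat_vec n ?L dY i) / ?q" for i
  proof -
    have "mat_vec n (Dmat p xL xR yL yR N1 N2 WU) X i - mat_vec n (Dmat p xL xR yL yR N1 N2 WV) Y i
      = (mat_vec n ?B X i - mat_vec n ?B Y i) + (mat_vec n ?L X i - mat_vec n ?L Y i)
        + (WU i ^ p * mat_vec n ?L X i - WV i ^ p * mat_vec n ?L Y i
          + (mat_vec n ?L (\<lambda>k. WU k ^ p * X k) i - mat_vec n ?L (\<lambda>k. WV k ^ p * Y k) i)) / ?q"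
      unfolding DD_expand by (simp add: diff_divide_distrib add_divide_distrib)
    also have "\<dots> = mat_vec n ?B E i + mat_vec n ?L E i
        + (a i * mat_vec n ?L E i + mat_vec n ?L (\<lambda>k. a k * E k) i) / ?q
        + (d i * mat_vec n ?L Y i + mat_vec n ?L dY i) / ?q"
      unfolding BX LW LX by (simp add: a_def d_def algebra_simps add_divide_distrib diff_divide_distrib)
    finally show ?thesis by (simp add: algebra_simps add_divide_distrib)
  qed
  have z1: "(\<Sum>i<n. E i * mat_vec n ?B E i) = 0" by (rule skew_quad[OF Bmat_skew])
  have z2: "(\<Sum>i<n. E i * mat_vec n ?L E i) = 0" by (rule skew_quad[OF Lmat_skew])
  have z3: "(\<Sum>i<n. E i * a i * mat_vec n ?L E i) + (\<Sum>i<n. E i * mat_vec n ?L (\<lambda>k. a k * E k) i) = 0"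
    by (rule skew_pair[OF Lmat_skew])
  have mv: "(\<Sum>i<n. E i * mat_vec n ?L dY i) = - (\<Sum>i<n. dY i * mat_vec n ?L E i)"
    by (rule skew_move[OF Lmat_skew])
  have "(\<Sum>i<n. (mat_vec n (Dmat p xL xR yL yR N1 N2 WU) X i - mat_vec n (Dmat p xL xR yL yR N1 N2 WV) Y i) * E i)
     = (\<Sum>i<n. E i * mat_vec n ?B E i) + (\<Sum>i<n. E i * mat_vec n ?L E i)
       + ((\<Sum>i<n. E i * a i * mat_vec n ?L E i) + (\<Sum>i<n. E i * mat_vec n ?L (\<lambda>k. a k * E k) i)) / ?q
       + ((\<Sum>i<n. E i * d i * mat_vec n ?L Y i) + (\<Sum>i<n. E i * mat_vec n ?L dY i)) / ?q"
    unfolding pw by (simp only: sum.distrib sum_divide_distrib[symmetric])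
  also have "\<dots> = ((\<Sum>i<n. E i * d i * mat_vec n ?L Y i) - (\<Sum>i<n. dY i * mat_vec n ?L E i)) / ?q"
    unfolding z1 z2 z3 mv by simp
  finally show ?thesis unfolding E_def d_def dY_def .
qed


lemma nh_L2: assumes "0 \<le> h1 * h2"
  shows "norm_h h1 h2 N1 N2 X = sqrt (h1 * h2) * L2_set X {..<N1 * N2}"
  unfolding norm_h_def inner_h_def L2_set_def by (simp add: real_sqrt_mult power2_eq_square)

lemma L2_scale: "L2_set (\<lambda>x. r * f x) A = \<bar>r\<bar> * L2_set f A"
proof -
  have "L2_set (\<lambda>x. r * f x) A = L2_set (\<lambda>x. \<bar>r\<bar> * f x) A"
    unfolding L2_set_def by (simp add: power_mult_distrib)
  also have "\<dots> = \<bar>r\<bar> * L2_set f A" by (rule L2_set_right_distrib[symmetric]) simp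
  finally show ?thesis .
qed

lemma nh_comb: assumes "0 \<le> h1 * h2"
  shows "norm_h h1 h2 N1 N2 (\<lambda>m. a * X m + b * Y m) \<le> \<bar>a\<bar> * norm_h h1 h2 N1 N2 X + \<bar>b\<bar> * norm_h h1 h2 N1 N2 Y"
proof -
  have "L2_set (\<lambda>m. a * X m + b * Y m) {..<N1 * N2} \<le> L2_set (\<lambda>m. a * X m) {..<N1 * N2} + L2_set (\<lambda>m. b * Y m) {..<N1 * N2}"
    by (rule L2_set_triangle_ineq)
  then have "sqrt (h1 * h2) * L2_set (\<lambda>m. a * X m + b * Y m) {..<N1 * N2}
     \<le> sqrt (h1 * h2) * (\<bar>a\<bar> * L2_set X {..<N1 * N2} + \<bar>b\<bar> * L2_set Y {..<N1 * N2})"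
    unfolding L2_scale using assms by (intro mult_left_mono) auto
  then show ?thesis unfolding nh_L2[OF assms] by (simp add: algebra_simps)
qed

lemma nh_cong: assumes "\<And>m. m < N1 * N2 \<Longrightarrow> X m = Y m" shows "norm_h h1 h2 N1 N2 X = norm_h h1 h2 N1 N2 Y"
proof -
  have "(\<Sum>m<N1 * N2. X m * X m) = (\<Sum>m<N1 * N2. Y m * Y m)" by (rule sum.cong) (auto simp: assms)
  then show ?thesis unfolding norm_h_def inner_h_def by simp
qed

lemma L2_abs: "L2_set (\<lambda>x. \<bar>f x\<bar>) A = L2_set f A" unfolding L2_set_def by simp

lemma nh_mono: assumes "0 \<le> h1 * h2" "0 \<le> c" "\<And>m. m < N1 * N2 \<Longrightarrow> \<bar>X m\<bar> \<le> c * \<bar>Y m\<bar>"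
  shows "norm_h h1 h2 N1 N2 X \<le> c * norm_h h1 h2 N1 N2 Y"
proof -
  have "L2_set (\<lambda>m. \<bar>X m\<bar>) {..<N1 * N2} \<le> L2_set (\<lambda>m. c * \<bar>Y m\<bar>) {..<N1 * N2}"
    by (rule L2_set_mono) (use assms in auto)
  then have "L2_set X {..<N1 * N2} \<le> c * L2_set Y {..<N1 * N2}" unfolding L2_scale L2_abs using assms(2) by simp
  then show ?thesis unfolding nh_L2[OF assms(1)] using assms(1)
    by (metis mult.left_commute mult_left_mono real_sqrt_ge_zero)
qed

lemma nh_cs: assumes "0 \<le> h1 * h2"
  shows "h1 * h2 * (\<Sum>m<N1 * N2. \<bar>f m\<bar> * \<bar>g m\<bar>) \<le> norm_h h1 h2 N1 N2 f * norm_h h1 h2 N1 N2 g"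
proof -
  have "h1 * h2 * (\<Sum>m<N1 * N2. \<bar>f m\<bar> * \<bar>g m\<bar>) \<le> h1 * h2 * (L2_set f {..<N1 * N2} * L2_set g {..<N1 * N2})"
    using assms by (intro mult_left_mono L2_set_mult_ineq)
  also have "\<dots> = norm_h h1 h2 N1 N2 f * norm_h h1 h2 N1 N2 g"
  proof -
    have "sqrt (h1 * h2) * sqrt (h1 * h2) = h1 * h2" using assms by simp
    then show ?thesis unfolding nh_L2[OF assms] by (metis mult.assoc mult.left_commute)
  qed
  finally show ?thesis .
qed

lemma lap_lin: "lap_h h1 h2 N1 N2 (\<lambda>m. a * X m + b * Y m) = (\<lambda>m. a * lap_h h1 h2 N1 N2 X m + b * lap_h h1 h2 N1 N2 Y m)"
proof -
  have g: "gval N1 N2 (\<lambda>m. a * X m + b * Y m) = (\<lambda>j1 j2. a * gval N1 N2 X j1 j2 + b * gval N1 N2 Y j1 j2)"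
    by (simp add: fun_eq_iff gval_def)
  show ?thesis unfolding lap_h_def g of_grid_def by (simp add: fun_eq_iff divide_inverse algebra_simps)
qed

lemma mat_vec_lin: "mat_vec n M (\<lambda>m. a * X m + b * Y m) i = a * mat_vec n M X i + b * mat_vec n M Y i"
  unfolding mat_vec_def by (simp add: sum.distrib sum_distrib_left algebra_simps)

lemma pow_diff_bound:
  fixes x y M :: real
  assumes "\<bar>x\<bar> \<le> M" "\<bar>y\<bar> \<le> M"
  shows "\<bar>x ^ p - y ^ p\<bar> \<le> real p * M ^ (p - 1) * \<bar>x - y\<bar>"
proof -
  have "x ^ p - y ^ p = (x - y) * (\<Sum>i<p. y ^ (p - Suc i) * x ^ i)" by (rule power_diff_sumr2)
  moreover have "\<bar>\<Sum>i<p. y ^ (p - Suc i) * x ^ i\<bar> \<le> real p * M ^ (p - 1)"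
  proof -
    have "\<bar>\<Sum>i<p. y ^ (p - Suc i) * x ^ i\<bar> \<le> (\<Sum>i<p. \<bar>y ^ (p - Suc i) * x ^ i\<bar>)" by (rule sum_abs)
    also have "\<dots> \<le> (\<Sum>i<p. M ^ (p - 1))"
    proof (rule sum_mono)
      fix i assume i: "i \<in> {..<p}"
      have "\<bar>y ^ (p - Suc i) * x ^ i\<bar> = \<bar>y\<bar> ^ (p - Suc i) * \<bar>x\<bar> ^ i" by (simp add: abs_mult power_abs)
      also have "\<dots> \<le> M ^ (p - Suc i) * M ^ i"
        using assms by (intro mult_mono power_mono) auto
      also have "\<dots> = M ^ (p - 1)" using i by (simp add: power_add[symmetric])
      finally show "\<bar>y ^ (p - Suc i) * x ^ i\<bar> \<le> M ^ (p - 1)" .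
    qed
    also have "\<dots> = real p * M ^ (p - 1)" by simp
    finally show ?thesis .
  qed
  ultimately have "\<bar>x ^ p - y ^ p\<bar> = \<bar>x - y\<bar> * \<bar>\<Sum>i<p. y ^ (p - Suc i) * x ^ i\<bar>" and
    b: "\<bar>\<Sum>i<p. y ^ (p - Suc i) * x ^ i\<bar> \<le> real p * M ^ (p - 1)" by (simp_all add: abs_mult)
  moreover have "\<bar>x - y\<bar> * \<bar>\<Sum>i<p. y ^ (p - Suc i) * x ^ i\<bar> \<le> \<bar>x - y\<bar> * (real p * M ^ (p - 1))"
    by (rule mult_left_mono[OF b]) simp
  ultimately show ?thesis by (simp add: mult.commute)
qed

lemma inf_bound: assumes "norm_inf_h N1 N2 X \<le> c" "m < N1 * N2" shows "\<bar>X m\<bar> \<le> c"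
proof -
  have "\<bar>X m\<bar> \<le> norm_inf_h N1 N2 X" unfolding norm_inf_h_def using assms(2) by (intro Max_ge) auto
  then show ?thesis using assms(1) by simp
qed

lemma xy_le: "x * y \<le> (x\<^sup>2 + y\<^sup>2) / (2::real)"
proof -
  have "0 \<le> (x - y)\<^sup>2" by simp
  then show ?thesis by (simp add: power2_eq_square algebra_simps)
qed


lemma Ks_nonneg: "0 < l1 \<Longrightarrow> 0 < l2 \<Longrightarrow> 0 \<le> Ks l1 l2"
  unfolding Ks_def by simp

lemma amgm8: "8 * (a * b) \<le> (2 * (a + b))\<^sup>2" for a b :: real
proof -
  have "0 \<le> (a - b)\<^sup>2" by simp
  then show ?thesis by (simp add: power2_eq_square algebra_simps)
qed

lemma sq_le_2: "x\<^sup>2 \<le> (2 * (a + b))\<^sup>2 \<Longrightarrow> 0 \<le> a \<Longrightarrow> 0 \<le> b \<Longrightarrow> x \<le> 2 * (a + b)" for x a b :: real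
  by (rule power2_le_imp_le) auto

lemma LE_bound:
  assumes N: "N1 > 0" "N2 > 0" "even N1" "even N2" and l: "xL < xR" "yL < yR"
    and h: "h1 = (xR - xL) / real N1" "h2 = (yR - yL) / real N2"
  shows "norm_h h1 h2 N1 N2 (mat_vec (N1 * N2) (Lmat xL xR yL yR N1 N2) E)
     \<le> 2 * (norm_h h1 h2 N1 N2 E + norm_h h1 h2 N1 N2 (lap_h h1 h2 N1 N2 E))"
proof -
  have hp: "h1 > 0" "h2 > 0" unfolding h using N l by auto
  have hh: "0 \<le> h1 * h2" using hp by simp
  let ?e = "norm_h h1 h2 N1 N2 E" and ?g = "norm_h h1 h2 N1 N2 (lap_h h1 h2 N1 N2 E)"
  have e0: "0 \<le> ?e" "0 \<le> ?g" using nh_nonneg[OF hh] by auto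
  have "(norm_h h1 h2 N1 N2 (mat_vec (N1 * N2) (Lmat xL xR yL yR N1 N2) E))\<^sup>2
     = h1 * h2 * (\<Sum>m<N1 * N2. (mat_vec (N1 * N2) (Lmat xL xR yL yR N1 N2) E m)\<^sup>2)" by (rule nh_sq[OF hh])
  also have "\<dots> \<le> h1 * h2 * (8 * ((\<Sum>m<N1 * N2. (dxp h1 N1 N2 E m)\<^sup>2) + (\<Sum>m<N1 * N2. (dyp h2 N1 N2 E m)\<^sup>2)))"
  proof -
    have sp: "(\<Sum>m<N1 * N2. (mat_vec (N1 * N2) (Lmat xL xR yL yR N1 N2) E m)\<^sup>2)
      \<le> 8 * ((\<Sum>m<N1 * N2. (dxp h1 N1 N2 E m)\<^sup>2) + (\<Sum>m<N1 * N2. (dyp h2 N1 N2 E m)\<^sup>2))"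
      using specL[OF N l, of E] unfolding h(1)[symmetric] h(2)[symmetric] .
    show ?thesis by (rule mult_left_mono[OF sp hh])
  qed
  also have "\<dots> = 8 * grad_norm_sq h1 h2 N1 N2 E" unfolding grad_eq[OF hh] by simp
  also have "\<dots> \<le> 8 * (?e * ?g)" using grad_bound[OF N(1,2) hp, of E] by simp
  also have "\<dots> \<le> (2 * (?e + ?g))\<^sup>2" by (rule amgm8)
  finally show ?thesis using e0 by (intro sq_le_2)
qed

lemma core_bound:
  fixes X Y WU WV :: "nat \<Rightarrow> real"
  assumes N: "N1 > 0" "N2 > 0" "even N1" "even N2" and l: "xL < xR" "yL < yR"
    and h: "h1 = (xR - xL) / real N1" "h2 = (yR - yL) / real N2"
    and M0: "0 \<le> M0" "\<And>m. m < N1 * N2 \<Longrightarrow> \<bar>WU m\<bar> \<le> M0" "\<And>m. m < N1 * N2 \<Longrightarrow> \<bar>WV m\<bar> \<le> M0"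
    and K0: "0 \<le> K0" "\<And>m. m < N1 * N2 \<Longrightarrow> \<bar>Y m\<bar> \<le> K0"
    and LY: "norm_h h1 h2 N1 N2 (mat_vec (N1 * N2) (Lmat xL xR yL yR N1 N2) Y) \<le> LY0"
  shows "inner_h h1 h2 N1 N2 (\<lambda>m. mat_vec (N1 * N2) (Dmat p xL xR yL yR N1 N2 WU) X m
                               - mat_vec (N1 * N2) (Dmat p xL xR yL yR N1 N2 WV) Y m) (\<lambda>m. X m - Y m)
    \<le> real p * M0 ^ (p - 1) * norm_h h1 h2 N1 N2 (\<lambda>m. WU m - WV m)
       * (sqrt (Ks (xR - xL) (yR - yL)) * LY0 + 2 * K0)
       * (norm_h h1 h2 N1 N2 (\<lambda>m. X m - Y m) + norm_h h1 h2 N1 N2 (lap_h h1 h2 N1 N2 (\<lambda>m. X m - Y m)))"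
proof -
  let ?n = "N1 * N2" and ?L = "Lmat xL xR yL yR N1 N2" and ?q = "real p + 2"
  let ?nh = "norm_h h1 h2 N1 N2"
  define E where "E m = X m - Y m" for m
  define d where "d m = WU m ^ p - WV m ^ p" for m
  define P where "P = real p * M0 ^ (p - 1)"
  define A where "A = ?nh (\<lambda>m. WU m - WV m)"
  define e where "e = ?nh E"
  define g where "g = ?nh (lap_h h1 h2 N1 N2 E)"
  define S where "S = sqrt (Ks (xR - xL) (yR - yL)) * (e + g)"
  have hp: "h1 > 0" "h2 > 0" unfolding h using N l by auto
  have hh: "0 \<le> h1 * h2" using hp by simp
  have e0: "0 \<le> e" "0 \<le> g" unfolding e_def g_def using nh_nonneg[OF hh] by auto
  have P0: "0 \<le> P" unfolding P_def using M0 by simp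
  have A0: "0 \<le> A" unfolding A_def using nh_nonneg[OF hh] by auto
  have S0: "0 \<le> S" unfolding S_def using e0 Ks_nonneg[of "xR - xL" "yR - yL"] l by simp
  have Eb: "\<bar>E m\<bar> \<le> S" if "m < ?n" for m
  proof -
    have "(E m)\<^sup>2 \<le> Ks (xR - xL) (yR - yL) * (e + g)\<^sup>2"
      unfolding e_def g_def h using sup_norm[OF N(1,2) _ _ that, of "xR - xL" "yR - yL" E] l by simp
    then have "sqrt ((E m)\<^sup>2) \<le> sqrt (Ks (xR - xL) (yR - yL) * (e + g)\<^sup>2)" by (rule real_sqrt_le_mono)
    then show ?thesis unfolding S_def using e0 by (simp add: real_sqrt_mult)
  qed
  have dnh: "?nh d \<le> P * A"
    unfolding A_def P_def d_def
  proof (rule nh_mono[OF hh])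
    show "0 \<le> real p * M0 ^ (p - 1)" using M0 by simp
    fix m assume "m < N1 * N2"
    then show "\<bar>WU m ^ p - WV m ^ p\<bar> \<le> real p * M0 ^ (p - 1) * \<bar>WU m - WV m\<bar>"
      using M0 by (intro pow_diff_bound) auto
  qed
  have dnh0: "0 \<le> ?nh d" using nh_nonneg[OF hh] by auto
  have LE: "?nh (mat_vec ?n ?L E) \<le> 2 * (e + g)"
    unfolding e_def g_def by (rule LE_bound[OF N l h])
  have LY0: "0 \<le> LY0" using LY nh_nonneg[OF hh] by (meson order_trans)
  have key: "(\<Sum>i<?n. (mat_vec ?n (Dmat p xL xR yL yR N1 N2 WU) X i - mat_vec ?n (Dmat p xL xR yL yR N1 N2 WV) Y i) * E i)
     = ((\<Sum>i<?n. E i * d i * mat_vec ?n ?L Y i) - (\<Sum>i<?n. (d i * Y i) * mat_vec ?n ?L E i)) / ?q"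
    unfolding E_def d_def by (rule key_identity)
  have T1: "h1 * h2 * (\<Sum>i<?n. E i * d i * mat_vec ?n ?L Y i) \<le> S * (?nh d * ?nh (mat_vec ?n ?L Y))"
  proof -
    have "(\<Sum>i<?n. E i * d i * mat_vec ?n ?L Y i) \<le> (\<Sum>i<?n. S * (\<bar>d i\<bar> * \<bar>mat_vec ?n ?L Y i\<bar>))"
    proof (rule sum_mono)
      fix i assume "i \<in> {..<?n}"
      then have "\<bar>E i\<bar> \<le> S" using Eb by auto
      then have "\<bar>E i\<bar> * (\<bar>d i\<bar> * \<bar>mat_vec ?n ?L Y i\<bar>) \<le> S * (\<bar>d i\<bar> * \<bar>mat_vec ?n ?L Y i\<bar>)"
        by (rule mult_right_mono) simp
      moreover have "E i * d i * mat_vec ?n ?L Y i \<le> \<bar>E i\<bar> * (\<bar>d i\<bar> * \<bar>mat_vec ?n ?L Y i\<bar>)"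
        by (metis abs_ge_self abs_mult mult.assoc)
      ultimately show "E i * d i * mat_vec ?n ?L Y i \<le> S * (\<bar>d i\<bar> * \<bar>mat_vec ?n ?L Y i\<bar>)" by linarith
    qed
    then have "h1 * h2 * (\<Sum>i<?n. E i * d i * mat_vec ?n ?L Y i) \<le> h1 * h2 * (S * (\<Sum>i<?n. \<bar>d i\<bar> * \<bar>mat_vec ?n ?L Y i\<bar>))"
      unfolding sum_distrib_left[symmetric] by (rule mult_left_mono[OF _ hh])
    also have "\<dots> = S * (h1 * h2 * (\<Sum>i<?n. \<bar>d i\<bar> * \<bar>mat_vec ?n ?L Y i\<bar>))" by simp
    also have "\<dots> \<le> S * (?nh d * ?nh (mat_vec ?n ?L Y))"
      using S0 nh_cs[OF hh] by (intro mult_left_mono) auto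
    finally show ?thesis .
  qed
  have T2: "- (h1 * h2 * (\<Sum>i<?n. (d i * Y i) * mat_vec ?n ?L E i)) \<le> K0 * (?nh d * ?nh (mat_vec ?n ?L E))"
  proof -
    have "- (\<Sum>i<?n. (d i * Y i) * mat_vec ?n ?L E i) \<le> (\<Sum>i<?n. K0 * (\<bar>d i\<bar> * \<bar>mat_vec ?n ?L E i\<bar>))"
      unfolding sum_negf[symmetric]
    proof (rule sum_mono)
      fix i assume "i \<in> {..<?n}"
      then have "\<bar>Y i\<bar> \<le> K0" using K0 by auto
      then have "\<bar>Y i\<bar> * (\<bar>d i\<bar> * \<bar>mat_vec ?n ?L E i\<bar>) \<le> K0 * (\<bar>d i\<bar> * \<bar>mat_vec ?n ?L E i\<bar>)"
        by (rule mult_right_mono) simp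
      moreover have "- ((d i * Y i) * mat_vec ?n ?L E i) \<le> \<bar>Y i\<bar> * (\<bar>d i\<bar> * \<bar>mat_vec ?n ?L E i\<bar>)"
      proof -
        have "- ((d i * Y i) * mat_vec ?n ?L E i) \<le> \<bar>(d i * Y i) * mat_vec ?n ?L E i\<bar>" by (rule abs_ge_minus_self)
        also have "\<dots> = \<bar>Y i\<bar> * (\<bar>d i\<bar> * \<bar>mat_vec ?n ?L E i\<bar>)" by (simp add: abs_mult mult_ac)
        finally show ?thesis .
      qed
      ultimately show "- ((d i * Y i) * mat_vec ?n ?L E i) \<le> K0 * (\<bar>d i\<bar> * \<bar>mat_vec ?n ?L E i\<bar>)" by linarith
    qed
    then have "h1 * h2 * (- (\<Sum>i<?n. (d i * Y i) * mat_vec ?n ?L E i)) \<le> h1 * h2 * (K0 * (\<Sum>i<?n. \<bar>d i\<bar> * \<bar>mat_vec ?n ?L E i\<bar>))"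
      unfolding sum_distrib_left[symmetric] by (rule mult_left_mono[OF _ hh])
    also have "\<dots> = K0 * (h1 * h2 * (\<Sum>i<?n. \<bar>d i\<bar> * \<bar>mat_vec ?n ?L E i\<bar>))" by simp
    also have "\<dots> \<le> K0 * (?nh d * ?nh (mat_vec ?n ?L E))"
      using K0 nh_cs[OF hh] by (intro mult_left_mono) auto
    finally show ?thesis by simp
  qed
  define R where "R = S * (?nh d * ?nh (mat_vec ?n ?L Y)) + K0 * (?nh d * ?nh (mat_vec ?n ?L E))"
  have R0: "0 \<le> R" unfolding R_def using S0 K0 dnh0 nh_nonneg[OF hh] by simp
  have "inner_h h1 h2 N1 N2 (\<lambda>m. mat_vec ?n (Dmat p xL xR yL yR N1 N2 WU) X m
                               - mat_vec ?n (Dmat p xL xR yL yR N1 N2 WV) Y m) (\<lambda>m. X m - Y m)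
      = (h1 * h2 * (\<Sum>i<?n. E i * d i * mat_vec ?n ?L Y i) - h1 * h2 * (\<Sum>i<?n. (d i * Y i) * mat_vec ?n ?L E i)) / ?q"
    unfolding inner_h_def E_def[symmetric] key by (simp add: right_diff_distrib)
  also have "\<dots> \<le> R / ?q" unfolding R_def using T1 T2 by (intro divide_right_mono) auto
  also have "\<dots> \<le> R"
  proof -
    have "R / ?q \<le> R / 1" by (rule divide_left_mono) (use R0 in auto)
    then show ?thesis by simp
  qed
  also have "R \<le> S * (P * A * LY0) + K0 * (P * A * (2 * (e + g)))"
    unfolding R_def
  proof (intro add_mono mult_left_mono)
    show "?nh d * ?nh (mat_vec ?n ?L Y) \<le> P * A * LY0"
      using dnh LY dnh0 nh_nonneg[OF hh] P0 A0 by (intro mult_mono) auto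
    show "?nh d * ?nh (mat_vec ?n ?L E) \<le> P * A * (2 * (e + g))"
      using dnh LE dnh0 nh_nonneg[OF hh] P0 A0 by (intro mult_mono) auto
  qed (use S0 K0 in auto)
  also have "\<dots> = P * A * (sqrt (Ks (xR - xL) (yR - yL)) * LY0 + 2 * K0) * (e + g)"
    unfolding S_def by (simp add: algebra_simps)
  finally show ?thesis unfolding P_def A_def e_def g_def E_def .
qed


definition Kc :: "nat \<Rightarrow> real \<Rightarrow> real \<Rightarrow> real \<Rightarrow> real" where
  "Kc p C0 l1 l2 = real p * (2 * \<bar>C0\<bar>) ^ (p - 1) * (sqrt (Ks l1 l2) * (3 * \<bar>C0\<bar>) + 2 * \<bar>C0\<bar>)"

lemma Kc_nonneg: "0 < l1 \<Longrightarrow> 0 < l2 \<Longrightarrow> 0 \<le> Kc p C0 l1 l2"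
  unfolding Kc_def using Ks_nonneg[of l1 l2] by simp

lemma LV_bound:
  assumes N: "N1 > 0" "N2 > 0" "even N1" "even N2" and l: "xL < xR" "yL < yR"
    and h: "h1 = (xR - xL) / real N1" "h2 = (yR - yL) / real N2"
    and G: "sqrt (grad_norm_sq h1 h2 N1 N2 V) \<le> C0"
  shows "norm_h h1 h2 N1 N2 (mat_vec (N1 * N2) (Lmat xL xR yL yR N1 N2) V) \<le> 3 * \<bar>C0\<bar>"
proof -
  have hp: "h1 > 0" "h2 > 0" unfolding h using N l by auto
  have hh: "0 \<le> h1 * h2" using hp by simp
  have g0: "0 \<le> grad_norm_sq h1 h2 N1 N2 V" unfolding grad_norm_sq_def by simp
  have gC: "grad_norm_sq h1 h2 N1 N2 V \<le> \<bar>C0\<bar>\<^sup>2"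
  proof -
    have "sqrt (grad_norm_sq h1 h2 N1 N2 V) \<le> \<bar>C0\<bar>" using G by simp
    then have "(sqrt (grad_norm_sq h1 h2 N1 N2 V))\<^sup>2 \<le> \<bar>C0\<bar>\<^sup>2" using g0 by (intro power_mono) auto
    then show ?thesis using g0 by simp
  qed
  have "(norm_h h1 h2 N1 N2 (mat_vec (N1 * N2) (Lmat xL xR yL yR N1 N2) V))\<^sup>2
     = h1 * h2 * (\<Sum>m<N1 * N2. (mat_vec (N1 * N2) (Lmat xL xR yL yR N1 N2) V m)\<^sup>2)" by (rule nh_sq[OF hh])
  also have "\<dots> \<le> h1 * h2 * (8 * ((\<Sum>m<N1 * N2. (dxp h1 N1 N2 V m)\<^sup>2) + (\<Sum>m<N1 * N2. (dyp h2 N1 N2 V m)\<^sup>2)))"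
  proof -
    have sp: "(\<Sum>m<N1 * N2. (mat_vec (N1 * N2) (Lmat xL xR yL yR N1 N2) V m)\<^sup>2)
      \<le> 8 * ((\<Sum>m<N1 * N2. (dxp h1 N1 N2 V m)\<^sup>2) + (\<Sum>m<N1 * N2. (dyp h2 N1 N2 V m)\<^sup>2))"
      using specL[OF N l, of V] unfolding h(1)[symmetric] h(2)[symmetric] .
    show ?thesis by (rule mult_left_mono[OF sp hh])
  qed
  also have "\<dots> = 8 * grad_norm_sq h1 h2 N1 N2 V" unfolding grad_eq[OF hh] by simp
  also have "\<dots> \<le> 8 * \<bar>C0\<bar>\<^sup>2" using gC by simp
  also have "\<dots> \<le> (3 * \<bar>C0\<bar>)\<^sup>2" by (simp add: power_mult_distrib)
  finally show ?thesis by (rule power2_le_imp_le) simp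
qed

lemma lin1: "p1 \<le> (s0 + s1) / 2 \<Longrightarrow> p2 \<le> (s0 + t1) / 2 \<Longrightarrow> p3 \<le> (s0 + t0) / 2 \<Longrightarrow>
  0 \<le> s1 \<Longrightarrow> 0 \<le> t0 \<Longrightarrow> 0 \<le> t1 \<Longrightarrow> 0 \<le> s0 \<Longrightarrow> (p1 + s0 + p2 + p3) / 2 \<le> 2 * (s0 + t0 + s1 + (t1::real))"
  by (simp add: field_simps)

lemma arith1:
  fixes A e g a0 a1 g0 g1 :: real
  assumes "0 \<le> A" "A \<le> a0" "0 \<le> e" "e \<le> a1 / 2 + a0 / 2" "0 \<le> g" "g \<le> g1 / 2 + g0 / 2"
  shows "A * (e + g) \<le> 2 * (a0\<^sup>2 + g0\<^sup>2 + a1\<^sup>2 + g1\<^sup>2)"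
proof -
  have a0: "0 \<le> a0" using assms by linarith
  have "A * (e + g) \<le> a0 * (a1 / 2 + a0 / 2 + (g1 / 2 + g0 / 2))"
    using assms a0 by (intro mult_mono) auto
  also have "\<dots> = (a0 * a1 + a0 * a0 + a0 * g1 + a0 * g0) / 2" by (simp add: algebra_simps)
  also have "\<dots> \<le> 2 * (a0\<^sup>2 + g0\<^sup>2 + a1\<^sup>2 + g1\<^sup>2)"
  proof -
    have s: "0 \<le> a1 * a1" "0 \<le> g0 * g0" "0 \<le> g1 * g1" "0 \<le> a0 * a0" by simp_all
    show ?thesis using lin1[OF xy_le[of a0 a1] xy_le[of a0 g1] xy_le[of a0 g0]] s
      unfolding power2_eq_square by simp
  qed
  finally show ?thesis .
qed


lemma lin2:
  fixes pba pbg1 pbg pca pcb pcg1 pcg sa sb sc sg sg1 :: real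
  assumes "pba \<le> (sb + sa) / 2" "pbg1 \<le> (sb + sg1) / 2" "pbg \<le> (sb + sg) / 2"
    "pca \<le> (sc + sa) / 2" "pcb \<le> (sc + sb) / 2" "pcg1 \<le> (sc + sg1) / 2" "pcg \<le> (sc + sg) / 2"
    "0 \<le> sa" "0 \<le> sb" "0 \<le> sc" "0 \<le> sg" "0 \<le> sg1"
  shows "3 / 4 * (pba + sb + pbg1 + pbg) + 1 / 4 * (pca + pcb + pcg1 + pcg) \<le> 2 * (sc + sb + sa + sg + sg1)"
  using assms by (simp add: field_simps)

lemma arith2:
  fixes A e g a b c gn gn1 :: real
  assumes "0 \<le> A" "A \<le> 3 / 2 * b + 1 / 2 * c" "0 \<le> e" "e \<le> a / 2 + b / 2" "0 \<le> g" "g \<le> gn1 / 2 + gn / 2"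
    "0 \<le> b" "0 \<le> c"
  shows "A * (e + g) \<le> 2 * (c\<^sup>2 + b\<^sup>2 + a\<^sup>2 + gn\<^sup>2 + gn1\<^sup>2)"
proof -
  have "A * (e + g) \<le> (3 / 2 * b + 1 / 2 * c) * (a / 2 + b / 2 + (gn1 / 2 + gn / 2))"
    using assms by (intro mult_mono) auto
  also have "\<dots> = 3 / 4 * (b * a + b * b + b * gn1 + b * gn) + 1 / 4 * (c * a + c * b + c * gn1 + c * gn)"
    by (simp add: algebra_simps)
  also have "\<dots> \<le> 2 * (c * c + b * b + a * a + gn * gn + gn1 * gn1)"
    by (rule lin2) (use xy_le[of b a] xy_le[of b gn1] xy_le[of b gn] xy_le[of c a] xy_le[of c b]
        xy_le[of c gn1] xy_le[of c gn] in \<open>simp_all add: power2_eq_square\<close>)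
  finally show ?thesis by (simp add: power2_eq_square)
qed

lemma gen_bound:
  fixes U V :: "nat \<Rightarrow> nat \<Rightarrow> real" and WU WV :: "nat \<Rightarrow> real"
  assumes N: "N1 > 0" "N2 > 0" "even N1" "even N2" and l: "xL < xR" "yL < yR"
    and h: "h1 = (xR - xL) / real N1" "h2 = (yR - yL) / real N2"
    and WU: "\<And>m. m < N1 * N2 \<Longrightarrow> \<bar>WU m\<bar> \<le> 2 * \<bar>C0\<bar>"
    and WV: "\<And>m. m < N1 * N2 \<Longrightarrow> \<bar>WV m\<bar> \<le> 2 * \<bar>C0\<bar>"
    and V1: "\<And>m. m < N1 * N2 \<Longrightarrow> \<bar>V (k + 1) m\<bar> \<le> \<bar>C0\<bar>"
    and V0: "\<And>m. m < N1 * N2 \<Longrightarrow> \<bar>V k m\<bar> \<le> \<bar>C0\<bar>"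
    and G1: "sqrt (grad_norm_sq h1 h2 N1 N2 (V (k + 1))) \<le> C0"
    and G0: "sqrt (grad_norm_sq h1 h2 N1 N2 (V k)) \<le> C0"
  shows "inner_h h1 h2 N1 N2
      (\<lambda>m. mat_vec (N1 * N2) (Dmat p xL xR yL yR N1 N2 WU) (\<lambda>m. (U (k + 1) m + U k m) / 2) m -
           mat_vec (N1 * N2) (Dmat p xL xR yL yR N1 N2 WV) (\<lambda>m. (V (k + 1) m + V k m) / 2) m)
      (\<lambda>m. (U (k + 1) m - V (k + 1) m + (U k m - V k m)) / 2)
    \<le> Kc p C0 (xR - xL) (yR - yL) * norm_h h1 h2 N1 N2 (\<lambda>m. WU m - WV m)
      * (norm_h h1 h2 N1 N2 (\<lambda>m. (U (k + 1) m - V (k + 1) m + (U k m - V k m)) / 2)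
       + norm_h h1 h2 N1 N2 (lap_h h1 h2 N1 N2 (\<lambda>m. (U (k + 1) m - V (k + 1) m + (U k m - V k m)) / 2)))"
proof -
  let ?n = "N1 * N2" and ?L = "Lmat xL xR yL yR N1 N2"
  define X where "X m = (U (k + 1) m + U k m) / 2" for m
  define Y where "Y m = (V (k + 1) m + V k m) / 2" for m
  have hp: "h1 > 0" "h2 > 0" unfolding h using N l by auto
  have hh: "0 \<le> h1 * h2" using hp by simp
  have XY: "(\<lambda>m. X m - Y m) = (\<lambda>m. (U (k + 1) m - V (k + 1) m + (U k m - V k m)) / 2)"
    unfolding X_def Y_def by (simp add: fun_eq_iff field_simps)
  have Yb: "\<bar>Y m\<bar> \<le> \<bar>C0\<bar>" if "m < ?n" for m
    using V1[OF that] V0[OF that] unfolding Y_def by auto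
  have LY: "norm_h h1 h2 N1 N2 (mat_vec ?n ?L Y) \<le> 3 * \<bar>C0\<bar>"
  proof -
    have eq: "mat_vec ?n ?L Y = (\<lambda>i. 1 / 2 * mat_vec ?n ?L (V (k + 1)) i + 1 / 2 * mat_vec ?n ?L (V k) i)"
    proof -
      have Yeq: "Y = (\<lambda>m. 1 / 2 * V (k + 1) m + 1 / 2 * V k m)" unfolding Y_def by (simp add: fun_eq_iff)
      show ?thesis unfolding Yeq by (rule ext) (rule mat_vec_lin)
    qed
    have "norm_h h1 h2 N1 N2 (mat_vec ?n ?L Y) \<le>
        \<bar>1 / 2\<bar> * norm_h h1 h2 N1 N2 (mat_vec ?n ?L (V (k + 1))) + \<bar>1 / 2\<bar> * norm_h h1 h2 N1 N2 (mat_vec ?n ?L (V k))"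
      unfolding eq by (rule nh_comb[OF hh])
    also have "\<dots> \<le> 1 / 2 * (3 * \<bar>C0\<bar>) + 1 / 2 * (3 * \<bar>C0\<bar>)"
      using LV_bound[OF N l h G1] LV_bound[OF N l h G0] by (intro add_mono) auto
    finally show ?thesis by simp
  qed
  have "inner_h h1 h2 N1 N2
      (\<lambda>m. mat_vec ?n (Dmat p xL xR yL yR N1 N2 WU) X m - mat_vec ?n (Dmat p xL xR yL yR N1 N2 WV) Y m)
      (\<lambda>m. X m - Y m)
    \<le> real p * (2 * \<bar>C0\<bar>) ^ (p - 1) * norm_h h1 h2 N1 N2 (\<lambda>m. WU m - WV m)
       * (sqrt (Ks (xR - xL) (yR - yL)) * (3 * \<bar>C0\<bar>) + 2 * \<bar>C0\<bar>)
       * (norm_h h1 h2 N1 N2 (\<lambda>m. X m - Y m) + norm_h h1 h2 N1 N2 (lap_h h1 h2 N1 N2 (\<lambda>m. X m - Y m)))"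
    by (rule core_bound[OF N l h _ WU WV _ Yb LY]) auto
  then show ?thesis unfolding XY unfolding X_def Y_def Kc_def by (simp add: algebra_simps)
qed


lemma hyp_facts:
  assumes HB: "\<forall>n\<le>M. norm_h h1 h2 N1 N2 (U n) \<le> C0 \<and> sqrt (grad_norm_sq h1 h2 N1 N2 (U n)) \<le> C0 \<and>
                  norm_h h1 h2 N1 N2 (lap_h h1 h2 N1 N2 (U n)) \<le> C0 \<and> norm_inf_h N1 N2 (U n) \<le> C0 \<and>
                  norm_h h1 h2 N1 N2 (V n) \<le> C0 \<and> sqrt (grad_norm_sq h1 h2 N1 N2 (V n)) \<le> C0 \<and>
                  norm_h h1 h2 N1 N2 (lap_h h1 h2 N1 N2 (V n)) \<le> C0 \<and> norm_inf_h N1 N2 (V n) \<le> C0"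
    and n: "n \<le> M"
  shows "\<And>m. m < N1 * N2 \<Longrightarrow> \<bar>U n m\<bar> \<le> \<bar>C0\<bar>" "\<And>m. m < N1 * N2 \<Longrightarrow> \<bar>V n m\<bar> \<le> \<bar>C0\<bar>"
    "sqrt (grad_norm_sq h1 h2 N1 N2 (V n)) \<le> C0"
proof -
  have H: "norm_inf_h N1 N2 (U n) \<le> C0" "norm_inf_h N1 N2 (V n) \<le> C0" "sqrt (grad_norm_sq h1 h2 N1 N2 (V n)) \<le> C0"
    using HB n by auto
  show "\<And>m. m < N1 * N2 \<Longrightarrow> \<bar>U n m\<bar> \<le> \<bar>C0\<bar>" using inf_bound[OF H(1)] by force
  show "\<And>m. m < N1 * N2 \<Longrightarrow> \<bar>V n m\<bar> \<le> \<bar>C0\<bar>" using inf_bound[OF H(2)] by force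
  show "sqrt (grad_norm_sq h1 h2 N1 N2 (V n)) \<le> C0" by (rule H(3))
qed

lemma case1:
  fixes U V :: "nat \<Rightarrow> nat \<Rightarrow> real"
  assumes l: "xL < xR" "yL < yR"
    and N: "0 < N1" "0 < N2" "even N1" "even N2" and M: "1 \<le> M"
    and HB: "\<forall>n\<le>M. norm_h h1 h2 N1 N2 (U n) \<le> C0 \<and> sqrt (grad_norm_sq h1 h2 N1 N2 (U n)) \<le> C0 \<and>
                  norm_h h1 h2 N1 N2 (lap_h h1 h2 N1 N2 (U n)) \<le> C0 \<and> norm_inf_h N1 N2 (U n) \<le> C0 \<and>
                  norm_h h1 h2 N1 N2 (V n) \<le> C0 \<and> sqrt (grad_norm_sq h1 h2 N1 N2 (V n)) \<le> C0 \<and>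
                  norm_h h1 h2 N1 N2 (lap_h h1 h2 N1 N2 (V n)) \<le> C0 \<and> norm_inf_h N1 N2 (V n) \<le> C0"
    and h: "h1 = (xR - xL) / real N1" "h2 = (yR - yL) / real N2"
  shows "inner_h h1 h2 N1 N2
      (\<lambda>m. mat_vec (N1 * N2) (Dmat p xL xR yL yR N1 N2 (U 0)) (\<lambda>m. (U (0 + 1) m + U 0 m) / 2) m -
           mat_vec (N1 * N2) (Dmat p xL xR yL yR N1 N2 (V 0)) (\<lambda>m. (V (0 + 1) m + V 0 m) / 2) m)
      (\<lambda>m. (U (0 + 1) m - V (0 + 1) m + (U 0 m - V 0 m)) / 2)
    \<le> (2 * Kc p C0 (xR - xL) (yR - yL) + 1) *
       ((norm_h h1 h2 N1 N2 (\<lambda>m. U 0 m - V 0 m))\<^sup>2 +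
        (norm_h h1 h2 N1 N2 (lap_h h1 h2 N1 N2 (\<lambda>m. U 0 m - V 0 m)))\<^sup>2 +
        (norm_h h1 h2 N1 N2 (\<lambda>m. U 1 m - V 1 m))\<^sup>2 +
        (norm_h h1 h2 N1 N2 (lap_h h1 h2 N1 N2 (\<lambda>m. U 1 m - V 1 m)))\<^sup>2)"
proof -
  let ?nh = "norm_h h1 h2 N1 N2" and ?lap = "lap_h h1 h2 N1 N2"
  let ?K = "Kc p C0 (xR - xL) (yR - yL)"
  have hp: "h1 > 0" "h2 > 0" unfolding h using N l by auto
  have hh: "0 \<le> h1 * h2" using hp by simp
  have K0: "0 \<le> ?K" using Kc_nonneg l by simp
  note F0 = hyp_facts[OF HB, of 0] and F1 = hyp_facts[OF HB, of 1]
  have WU: "\<bar>U 0 m\<bar> \<le> 2 * \<bar>C0\<bar>" "\<bar>V 0 m\<bar> \<le> 2 * \<bar>C0\<bar>" if "m < N1 * N2" for m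
    using F0(1)[OF _ that] F0(2)[OF _ that] by auto
  have gb: "inner_h h1 h2 N1 N2
      (\<lambda>m. mat_vec (N1 * N2) (Dmat p xL xR yL yR N1 N2 (U 0)) (\<lambda>m. (U (0 + 1) m + U 0 m) / 2) m -
           mat_vec (N1 * N2) (Dmat p xL xR yL yR N1 N2 (V 0)) (\<lambda>m. (V (0 + 1) m + V 0 m) / 2) m)
      (\<lambda>m. (U (0 + 1) m - V (0 + 1) m + (U 0 m - V 0 m)) / 2)
    \<le> ?K * ?nh (\<lambda>m. U 0 m - V 0 m)
      * (?nh (\<lambda>m. (U (0 + 1) m - V (0 + 1) m + (U 0 m - V 0 m)) / 2)
       + ?nh (?lap (\<lambda>m. (U (0 + 1) m - V (0 + 1) m + (U 0 m - V 0 m)) / 2)))"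
    by (rule gen_bound[OF N l h WU(1) WU(2)]) (use F0 F1 M in auto)
  have fe: "(\<lambda>m. (U (0 + 1) m - V (0 + 1) m + (U 0 m - V 0 m)) / 2) =
      (\<lambda>m. 1 / 2 * (U 1 m - V 1 m) + 1 / 2 * (U 0 m - V 0 m))"
    by (simp add: fun_eq_iff field_simps)
  have e: "?nh (\<lambda>m. (U (0 + 1) m - V (0 + 1) m + (U 0 m - V 0 m)) / 2)
      \<le> ?nh (\<lambda>m. U 1 m - V 1 m) / 2 + ?nh (\<lambda>m. U 0 m - V 0 m) / 2"
    unfolding fe using nh_comb[OF hh, of N1 N2 "1/2" "\<lambda>m. U 1 m - V 1 m" "1/2" "\<lambda>m. U 0 m - V 0 m"] by simp
  have g: "?nh (?lap (\<lambda>m. (U (0 + 1) m - V (0 + 1) m + (U 0 m - V 0 m)) / 2))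
      \<le> ?nh (?lap (\<lambda>m. U 1 m - V 1 m)) / 2 + ?nh (?lap (\<lambda>m. U 0 m - V 0 m)) / 2"
    unfolding fe lap_lin
    using nh_comb[OF hh, of N1 N2 "1/2" "?lap (\<lambda>m. U 1 m - V 1 m)" "1/2" "?lap (\<lambda>m. U 0 m - V 0 m)"] by simp
  have ar: "?nh (\<lambda>m. U 0 m - V 0 m) *
      (?nh (\<lambda>m. (U (0 + 1) m - V (0 + 1) m + (U 0 m - V 0 m)) / 2)
       + ?nh (?lap (\<lambda>m. (U (0 + 1) m - V (0 + 1) m + (U 0 m - V 0 m)) / 2)))
    \<le> 2 * ((?nh (\<lambda>m. U 0 m - V 0 m))\<^sup>2 + (?nh (?lap (\<lambda>m. U 0 m - V 0 m)))\<^sup>2 +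
        (?nh (\<lambda>m. U 1 m - V 1 m))\<^sup>2 + (?nh (?lap (\<lambda>m. U 1 m - V 1 m)))\<^sup>2)"
    by (rule arith1) (use e g nh_nonneg[OF hh] in auto)
  define RHS where "RHS = (?nh (\<lambda>m. U 0 m - V 0 m))\<^sup>2 + (?nh (?lap (\<lambda>m. U 0 m - V 0 m)))\<^sup>2 +
        (?nh (\<lambda>m. U 1 m - V 1 m))\<^sup>2 + (?nh (?lap (\<lambda>m. U 1 m - V 1 m)))\<^sup>2"
  have R0: "0 \<le> RHS" unfolding RHS_def by simp
  note gb
  also have "?K * ?nh (\<lambda>m. U 0 m - V 0 m)
      * (?nh (\<lambda>m. (U (0 + 1) m - V (0 + 1) m + (U 0 m - V 0 m)) / 2)
       + ?nh (?lap (\<lambda>m. (U (0 + 1) m - V (0 + 1) m + (U 0 m - V 0 m)) / 2))) \<le> ?K * (2 * RHS)"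
    unfolding mult.assoc using ar K0 unfolding RHS_def by (intro mult_left_mono) auto
  also have "\<dots> \<le> (2 * ?K + 1) * RHS" using R0 by (simp add: algebra_simps)
  finally show ?thesis unfolding RHS_def .
qed

lemma abs_hat: fixes a b c :: real assumes "\<bar>a\<bar> \<le> c" "\<bar>b\<bar> \<le> c" shows "\<bar>(3 * a - b) / 2\<bar> \<le> 2 * c"
proof -
  have "\<bar>3 * a - b\<bar> \<le> \<bar>3 * a\<bar> + \<bar>b\<bar>" by (rule abs_triangle_ineq4)
  also have "\<dots> \<le> 3 * c + c" using assms by simp
  finally show ?thesis by simp
qed

lemma case2:
  fixes U V :: "nat \<Rightarrow> nat \<Rightarrow> real"
  assumes l: "xL < xR" "yL < yR"
    and N: "0 < N1" "0 < N2" "even N1" "even N2"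
    and HB: "\<forall>n\<le>M. norm_h h1 h2 N1 N2 (U n) \<le> C0 \<and> sqrt (grad_norm_sq h1 h2 N1 N2 (U n)) \<le> C0 \<and>
                  norm_h h1 h2 N1 N2 (lap_h h1 h2 N1 N2 (U n)) \<le> C0 \<and> norm_inf_h N1 N2 (U n) \<le> C0 \<and>
                  norm_h h1 h2 N1 N2 (V n) \<le> C0 \<and> sqrt (grad_norm_sq h1 h2 N1 N2 (V n)) \<le> C0 \<and>
                  norm_h h1 h2 N1 N2 (lap_h h1 h2 N1 N2 (V n)) \<le> C0 \<and> norm_inf_h N1 N2 (V n) \<le> C0"
    and h: "h1 = (xR - xL) / real N1" "h2 = (yR - yL) / real N2"
    and n: "1 \<le> n" "n \<le> M - 1"
  shows "inner_h h1 h2 N1 N2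
      (\<lambda>m. mat_vec (N1 * N2) (Dmat p xL xR yL yR N1 N2 (\<lambda>m. (3 * U n m - U (n - 1) m) / 2)) (\<lambda>m. (U (n + 1) m + U n m) / 2) m -
           mat_vec (N1 * N2) (Dmat p xL xR yL yR N1 N2 (\<lambda>m. (3 * V n m - V (n - 1) m) / 2)) (\<lambda>m. (V (n + 1) m + V n m) / 2) m)
      (\<lambda>m. (U (n + 1) m - V (n + 1) m + (U n m - V n m)) / 2)
    \<le> (2 * Kc p C0 (xR - xL) (yR - yL) + 1) *
       ((norm_h h1 h2 N1 N2 (\<lambda>m. U (n - 1) m - V (n - 1) m))\<^sup>2 +
        (norm_h h1 h2 N1 N2 (\<lambda>m. U n m - V n m))\<^sup>2 +
        (norm_h h1 h2 N1 N2 (\<lambda>m. U (n + 1) m - V (n + 1) m))\<^sup>2 +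
        (norm_h h1 h2 N1 N2 (lap_h h1 h2 N1 N2 (\<lambda>m. U n m - V n m)))\<^sup>2 +
        (norm_h h1 h2 N1 N2 (lap_h h1 h2 N1 N2 (\<lambda>m. U (n + 1) m - V (n + 1) m)))\<^sup>2)"
proof -
  let ?nh = "norm_h h1 h2 N1 N2" and ?lap = "lap_h h1 h2 N1 N2"
  let ?K = "Kc p C0 (xR - xL) (yR - yL)"
  have hp: "h1 > 0" "h2 > 0" unfolding h using N l by auto
  have hh: "0 \<le> h1 * h2" using hp by simp
  have K0: "0 \<le> ?K" using Kc_nonneg l by simp
  have nM: "n - 1 \<le> M" "n \<le> M" "n + 1 \<le> M" using n by auto
  note Fm = hyp_facts[OF HB nM(1)] and F0 = hyp_facts[OF HB nM(2)] and F1 = hyp_facts[OF HB nM(3)]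
  have WU: "\<bar>(3 * U n m - U (n - 1) m) / 2\<bar> \<le> 2 * \<bar>C0\<bar>" "\<bar>(3 * V n m - V (n - 1) m) / 2\<bar> \<le> 2 * \<bar>C0\<bar>"
    if "m < N1 * N2" for m
    using abs_hat[OF F0(1)[OF that] Fm(1)[OF that]] abs_hat[OF F0(2)[OF that] Fm(2)[OF that]] by auto
  let ?E = "\<lambda>m. (U (n + 1) m - V (n + 1) m + (U n m - V n m)) / 2"
  have gb: "inner_h h1 h2 N1 N2
      (\<lambda>m. mat_vec (N1 * N2) (Dmat p xL xR yL yR N1 N2 (\<lambda>m. (3 * U n m - U (n - 1) m) / 2)) (\<lambda>m. (U (n + 1) m + U n m) / 2) m -
           mat_vec (N1 * N2) (Dmat p xL xR yL yR N1 N2 (\<lambda>m. (3 * V n m - V (n - 1) m) / 2)) (\<lambda>m. (V (n + 1) m + V n m) / 2) m)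
      ?E
    \<le> ?K * ?nh (\<lambda>m. (3 * U n m - U (n - 1) m) / 2 - (3 * V n m - V (n - 1) m) / 2)
      * (?nh ?E + ?nh (?lap ?E))"
    by (rule gen_bound[OF N l h WU(1) WU(2)]) (use F0 F1 in auto)
  have fe: "?E = (\<lambda>m. 1 / 2 * (U (n + 1) m - V (n + 1) m) + 1 / 2 * (U n m - V n m))"
    by (simp add: fun_eq_iff field_simps)
  have e: "?nh ?E \<le> ?nh (\<lambda>m. U (n + 1) m - V (n + 1) m) / 2 + ?nh (\<lambda>m. U n m - V n m) / 2"
    unfolding fe using nh_comb[OF hh, of N1 N2 "1/2" "\<lambda>m. U (n + 1) m - V (n + 1) m" "1/2" "\<lambda>m. U n m - V n m"] by simp
  have g: "?nh (?lap ?E) \<le> ?nh (?lap (\<lambda>m. U (n + 1) m - V (n + 1) m)) / 2 + ?nh (?lap (\<lambda>m. U n m - V n m)) / 2"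
    unfolding fe lap_lin
    using nh_comb[OF hh, of N1 N2 "1/2" "?lap (\<lambda>m. U (n + 1) m - V (n + 1) m)" "1/2" "?lap (\<lambda>m. U n m - V n m)"] by simp
  have fa: "(\<lambda>m. (3 * U n m - U (n - 1) m) / 2 - (3 * V n m - V (n - 1) m) / 2) =
     (\<lambda>m. 3 / 2 * (U n m - V n m) + (- 1 / 2) * (U (n - 1) m - V (n - 1) m))"
    by (simp add: fun_eq_iff field_simps)
  have A: "?nh (\<lambda>m. (3 * U n m - U (n - 1) m) / 2 - (3 * V n m - V (n - 1) m) / 2)
     \<le> 3 / 2 * ?nh (\<lambda>m. U n m - V n m) + 1 / 2 * ?nh (\<lambda>m. U (n - 1) m - V (n - 1) m)"
    unfolding fa using nh_comb[OF hh, of N1 N2 "3/2" "\<lambda>m. U n m - V n m" "-1/2" "\<lambda>m. U (n - 1) m - V (n - 1) m"] by simp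
  define RHS where "RHS = (?nh (\<lambda>m. U (n - 1) m - V (n - 1) m))\<^sup>2 + (?nh (\<lambda>m. U n m - V n m))\<^sup>2 +
        (?nh (\<lambda>m. U (n + 1) m - V (n + 1) m))\<^sup>2 + (?nh (?lap (\<lambda>m. U n m - V n m)))\<^sup>2 +
        (?nh (?lap (\<lambda>m. U (n + 1) m - V (n + 1) m)))\<^sup>2"
  have ar: "?nh (\<lambda>m. (3 * U n m - U (n - 1) m) / 2 - (3 * V n m - V (n - 1) m) / 2) * (?nh ?E + ?nh (?lap ?E))
     \<le> 2 * RHS"
    unfolding RHS_def by (rule arith2) (use e g A nh_nonneg[OF hh] in auto)
  have R0: "0 \<le> RHS" unfolding RHS_def by simp
  note gb
  also have "?K * ?nh (\<lambda>m. (3 * U n m - U (n - 1) m) / 2 - (3 * V n m - V (n - 1) m) / 2)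
      * (?nh ?E + ?nh (?lap ?E)) \<le> ?K * (2 * RHS)"
    unfolding mult.assoc using ar K0 by (intro mult_left_mono) auto
  also have "\<dots> \<le> (2 * ?K + 1) * RHS" using R0 by (simp add: algebra_simps)
  finally show ?thesis unfolding RHS_def .
qed


theorem lemma3p2:
  fixes xL xR yL yR C0 :: real and p :: nat
  assumes "xL < xR" and "yL < yR" and "p \<ge> 1"
  shows "\<exists>C > 0. \<forall>(N1::nat) (N2::nat) (M::nat) (U::nat \<Rightarrow> nat \<Rightarrow> real) (V::nat \<Rightarrow> nat \<Rightarrow> real).
    let h1 = (xR - xL) / real N1; h2 = (yR - yL) / real N2;
        ip = inner_h h1 h2 N1 N2; nh = norm_h h1 h2 N1 N2; lap = lap_h h1 h2 N1 N2;
        DD = (\<lambda>W X. mat_vec (N1 * N2) (Dmat p xL xR yL yR N1 N2 W) X);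
        eta = (\<lambda>n m. U n m - V n m);
        half = (\<lambda>W n m. (W (n + 1) m + W n m) / 2);
        hat = (\<lambda>W n m. (3 * W n m - W (n - 1) m) / 2)
    in (N1 > 0 \<and> N2 > 0 \<and> even N1 \<and> even N2 \<and> M \<ge> 1 \<and>
        (\<forall>n \<le> M. nh (U n) \<le> C0 \<and> sqrt (grad_norm_sq h1 h2 N1 N2 (U n)) \<le> C0 \<and>
                  nh (lap (U n)) \<le> C0 \<and> norm_inf_h N1 N2 (U n) \<le> C0 \<and>
                  nh (V n) \<le> C0 \<and> sqrt (grad_norm_sq h1 h2 N1 N2 (V n)) \<le> C0 \<and>
                  nh (lap (V n)) \<le> C0 \<and> norm_inf_h N1 N2 (V n) \<le> C0))
     \<longrightarrow>
       ip (\<lambda>m. DD (U 0) (half U 0) m - DD (V 0) (half V 0) m) (half eta 0)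
         \<le> C * ((nh (eta 0))\<^sup>2 + (nh (lap (eta 0)))\<^sup>2 + (nh (eta 1))\<^sup>2 + (nh (lap (eta 1)))\<^sup>2)
     \<and> (\<forall>n. 1 \<le> n \<and> n \<le> M - 1 \<longrightarrow>
         ip (\<lambda>m. DD (hat U n) (half U n) m - DD (hat V n) (half V n) m) (half eta n)
           \<le> C * ((nh (eta (n - 1)))\<^sup>2 + (nh (eta n))\<^sup>2 + (nh (eta (n + 1)))\<^sup>2
                  + (nh (lap (eta n)))\<^sup>2 + (nh (lap (eta (n + 1))))\<^sup>2))"
proof -
  have K0: "0 \<le> Kc p C0 (xR - xL) (yR - yL)" using Kc_nonneg assms(1,2) by simp
  show ?thesis
    apply (rule exI[of _ "2 * Kc p C0 (xR - xL) (yR - yL) + 1"])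
    apply (rule conjI)
    using K0 apply simp
    apply (intro allI)
    apply (unfold Let_def)
    apply (intro impI)
    apply (elim conjE)
    apply (rule conjI)
     apply (rule case1[OF assms(1,2)]; assumption?; rule refl)
    apply (intro allI impI)
    apply (elim conjE)
    apply (rule case2[OF assms(1,2)]; assumption?; rule refl)
    done
qed


end
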